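(* Let $V_0=\mathbb{C}[x_1,x_2,\dots]$ with each $x_i$ primitive, let $A$ be a commutative $\mathbb{C}$-algebra, let $r$ be an $A$-valued bicharacter on $V_0$, put $q_{mn}=r(x_m\otimes x_n)$ and \[ Q_p=\sum_{m,n\ge1}q_{mn}\frac{\partial^2}{\partial x_m\partial x_n}. \] Let $s=r\circ r^t$ be the symmetrization of $r$ and $\bullet=\bullet_s$. Then for all $P\in V_0$, \[ e^{Q_p}(P)=\mathrm{EQ}_r(P)=\sum r(P'\otimes P'')P''', \] and moreover $e^{Q_p}(P)=P^{\bullet}$. Furthermore $e^{Q_p}$ is a homomorphism from $(V_0\otimes A,\cdot)$ to $(V_0\otimes A,\bullet)$.
   Context: Hopf structure on $V_0$: $\Delta(x_i)=x_i\otimes1+1\otimes x_i$, $\eta(x_i)=0$. Sweedler notation: $\Delta(P)=\sum P'\otimes P''$, $\Delta^2(P)=\sum P'\otimes P''\otimes P'''$. An $A$-valued bicharacter is a linear map $r:V_0\otimes V_0\to A$ with $r(1\otimes a)=\eta(a)=r(a\otimes1)$, $r(ab\otimes c)=\sum r(a\otimes c')r(b\otimes c'')$, $r(a\otimes bc)=\sum r(a'\otimes b)r(a''\otimes c)$. $r^t(a\otimes b)=r(b\otimes a)$, and $(r\circ t)(a\otimes b)=\sum r(a'\otimes b')t(a''\otimes b'')$; the symmetrization $s=r\circ r^t$ is a symmetric bicharacter. The product $\bullet_s$ on $V_0\otimes A$ is the $A$-bilinear extension of $a\bullet_s b=\sum a'b'\,s(a''\otimes b'')$; it is associative and commutative with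 unit $1$. For $P\in V_0$ written as a linear combination of monomials $x_{i_1}x_{i_2}\cdots x_{i_k}$, the $\bullet$ polynomial $P^\bullet$ is the same linear combination of the elements $x_{i_1}\bullet x_{i_2}\bullet\cdots\bullet x_{i_k}$ (with the empty monomial $1$ mapped to $1$). $e^{Q_p}=\sum_k Q_p^k/k!$, acting $A$-linearly. *)

theory Defs
  imports Complex_Main "HOL-Library.Poly_Mapping" "HOL-Library.Product_Plus"
    "HOL-Library.Groups_Big_Fun"
begin

text \<open>Monomials in the variables x_0, x_1, ... are exponent vectors nat =>0 nat.
  V0 = C[x_0,x_1,...] is (mon =>0 complex); V0 (x) A = A[x_0,x_1,...] is (mon =>0 'a);
  V0 (x) V0 is ((mon * mon) =>0 complex) with the (convolution) tensor product algebra
  structure; V0 (x) V0 (x) V0 is ((mon * (mon * mon)) =>0 complex).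
  A commutative C-algebra A is a commutative ring 'a together with a ring
  homomorphism iota : complex => 'a (the structure map); c.a = iota c * a.\<close>

type_synonym mon = "nat \<Rightarrow>\<^sub>0 nat"
type_synonym V0 = "mon \<Rightarrow>\<^sub>0 complex"
type_synonym T2 = "(mon \<times> mon) \<Rightarrow>\<^sub>0 complex"
type_synonym T3 = "(mon \<times> mon \<times> mon) \<Rightarrow>\<^sub>0 complex"

definition calg_hom :: "(complex \<Rightarrow> 'a::comm_ring_1) \<Rightarrow> bool" where
  "calg_hom iota \<longleftrightarrow> (\<forall>x y. iota (x + y) = iota x + iota y) \<and>
     (\<forall>x y. iota (x * y) = iota x * iota y) \<and> iota 1 = 1"

definition Var :: "nat \<Rightarrow> mon" where "Var i = Poly_Mapping.single i 1"

definition mono :: "mon \<Rightarrow> V0" where "mono m = Poly_Mapping.single m 1"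

definition xv :: "nat \<Rightarrow> V0" where "xv i = mono (Var i)"

definition tensor :: "V0 \<Rightarrow> V0 \<Rightarrow> T2" where
  "tensor a b = (\<Sum>m\<in>Poly_Mapping.keys a. \<Sum>n\<in>Poly_Mapping.keys b. Poly_Mapping.single (m, n) (Poly_Mapping.lookup a m * Poly_Mapping.lookup b n))"

definition counit :: "V0 \<Rightarrow> complex" where "counit P = Poly_Mapping.lookup P 0"

definition delta_mon :: "mon \<Rightarrow> T2" where
  "delta_mon m = (\<Prod>i\<in>Poly_Mapping.keys m. (tensor (xv i) 1 + tensor 1 (xv i)) ^ Poly_Mapping.lookup m i)"

definition delta :: "V0 \<Rightarrow> T2" where
  "delta P = (\<Sum>m\<in>Poly_Mapping.keys P. Poly_Mapping.map (\<lambda>z. Poly_Mapping.lookup P m * z) (delta_mon m))"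

text \<open>Delta^2 = (Delta (x) id) o Delta\<close>
definition delta2 :: "V0 \<Rightarrow> T3" where
  "delta2 P = (\<Sum>(u, w)\<in>Poly_Mapping.keys (delta P). \<Sum>(u1, u2)\<in>Poly_Mapping.keys (delta (mono u)).
      Poly_Mapping.single (u1, u2, w) (Poly_Mapping.lookup (delta P) (u, w) * Poly_Mapping.lookup (delta (mono u)) (u1, u2)))"

text \<open>Sweedler sum  sum f(T', T'')  of a bilinear expression f over a tensor T\<close>
definition sw2 :: "(complex \<Rightarrow> 'a::comm_ring_1) \<Rightarrow> (V0 \<Rightarrow> V0 \<Rightarrow> 'a) \<Rightarrow> T2 \<Rightarrow> 'a" where
  "sw2 iota f T = (\<Sum>(u, v)\<in>Poly_Mapping.keys T. iota (Poly_Mapping.lookup T (u, v)) * f (mono u) (mono v))"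

definition lin_map2 :: "(complex \<Rightarrow> 'a::comm_ring_1) \<Rightarrow> (T2 \<Rightarrow> 'a) \<Rightarrow> bool" where
  "lin_map2 iota r \<longleftrightarrow> (\<forall>S T. r (S + T) = r S + r T) \<and>
     (\<forall>c T. r (Poly_Mapping.map (\<lambda>z. c * z) T) = iota c * r T)"

definition bicharacter :: "(complex \<Rightarrow> 'a::comm_ring_1) \<Rightarrow> (T2 \<Rightarrow> 'a) \<Rightarrow> bool" where
  "bicharacter iota r \<longleftrightarrow> lin_map2 iota r \<and>
     (\<forall>a. r (tensor 1 a) = iota (counit a) \<and> r (tensor a 1) = iota (counit a)) \<and>
     (\<forall>a b c. r (tensor (a * b) c) = sw2 iota (\<lambda>c1 c2. r (tensor a c1) * r (tensor b c2)) (delta c)) \<and>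
     (\<forall>a b c. r (tensor a (b * c)) = sw2 iota (\<lambda>a1 a2. r (tensor a1 b) * r (tensor a2 c)) (delta a))"

definition lin_ext :: "(complex \<Rightarrow> 'a::comm_ring_1) \<Rightarrow> (mon \<Rightarrow> mon \<Rightarrow> 'a) \<Rightarrow> T2 \<Rightarrow> 'a" where
  "lin_ext iota f T = (\<Sum>(m, n)\<in>Poly_Mapping.keys T. iota (Poly_Mapping.lookup T (m, n)) * f m n)"

definition transp :: "(complex \<Rightarrow> 'a::comm_ring_1) \<Rightarrow> (T2 \<Rightarrow> 'a) \<Rightarrow> T2 \<Rightarrow> 'a" where
  "transp iota r = lin_ext iota (\<lambda>m n. r (tensor (mono n) (mono m)))"

text \<open>(r o t)(a (x) b) = sum r(a' (x) b') t(a'' (x) b'')\<close>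
definition conv :: "(complex \<Rightarrow> 'a::comm_ring_1) \<Rightarrow> (T2 \<Rightarrow> 'a) \<Rightarrow> (T2 \<Rightarrow> 'a) \<Rightarrow> T2 \<Rightarrow> 'a" where
  "conv iota r t = lin_ext iota (\<lambda>m n.
     sw2 iota (\<lambda>a1 a2. sw2 iota (\<lambda>b1 b2. r (tensor a1 b1) * t (tensor a2 b2)) (delta (mono n)))
       (delta (mono m)))"

definition symmetrization :: "(complex \<Rightarrow> 'a::comm_ring_1) \<Rightarrow> (T2 \<Rightarrow> 'a) \<Rightarrow> T2 \<Rightarrow> 'a" where
  "symmetrization iota r = conv iota r (transp iota r)"

definition embA :: "(complex \<Rightarrow> 'a::comm_ring_1) \<Rightarrow> V0 \<Rightarrow> (mon \<Rightarrow>\<^sub>0 'a)" where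
  "embA iota P = Poly_Mapping.map iota P"

definition smultA :: "'a::comm_ring_1 \<Rightarrow> (mon \<Rightarrow>\<^sub>0 'a) \<Rightarrow> (mon \<Rightarrow>\<^sub>0 'a)" where
  "smultA c F = Poly_Mapping.map (\<lambda>z. c * z) F"

text \<open>the product bullet_s on V0 (x) A: A-bilinear extension of
  a bullet b = sum a' b' s(a'' (x) b'')\<close>
definition bullet_mon :: "(complex \<Rightarrow> 'a::comm_ring_1) \<Rightarrow> (T2 \<Rightarrow> 'a) \<Rightarrow> mon \<Rightarrow> mon \<Rightarrow> (mon \<Rightarrow>\<^sub>0 'a)" where
  "bullet_mon iota s \<alpha> \<beta> =
     (\<Sum>(a1, a2)\<in>Poly_Mapping.keys (delta (mono \<alpha>)). \<Sum>(b1, b2)\<in>Poly_Mapping.keys (delta (mono \<beta>)).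
        smultA (iota (Poly_Mapping.lookup (delta (mono \<alpha>)) (a1, a2) * Poly_Mapping.lookup (delta (mono \<beta>)) (b1, b2))
                * s (tensor (mono a2) (mono b2)))
          (embA iota (mono a1 * mono b1)))"

definition bullet :: "(complex \<Rightarrow> 'a::comm_ring_1) \<Rightarrow> (T2 \<Rightarrow> 'a) \<Rightarrow> (mon \<Rightarrow>\<^sub>0 'a) \<Rightarrow> (mon \<Rightarrow>\<^sub>0 'a) \<Rightarrow> (mon \<Rightarrow>\<^sub>0 'a)" where
  "bullet iota s F G = (\<Sum>\<alpha>\<in>Poly_Mapping.keys F. \<Sum>\<beta>\<in>Poly_Mapping.keys G.
      smultA (Poly_Mapping.lookup F \<alpha> * Poly_Mapping.lookup G \<beta>) (bullet_mon iota s \<alpha> \<beta>))"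

text \<open>bullet polynomial: each monomial x^alpha is written as the word
  x_{i1} x_{i2} ... x_{ik} (indices in increasing order, with multiplicity) and replaced by
  x_{i1} bullet (x_{i2} bullet ( ... bullet (x_{ik} bullet 1)))\<close>
definition mon_word :: "mon \<Rightarrow> nat list" where
  "mon_word \<alpha> = concat (map (\<lambda>i. replicate (Poly_Mapping.lookup \<alpha> i) i) (sorted_list_of_set (Poly_Mapping.keys \<alpha>)))"

definition bullet_word :: "(complex \<Rightarrow> 'a::comm_ring_1) \<Rightarrow> (T2 \<Rightarrow> 'a) \<Rightarrow> nat list \<Rightarrow> (mon \<Rightarrow>\<^sub>0 'a)" where
  "bullet_word iota s ws = foldr (\<lambda>i acc. bullet iota s (embA iota (xv i)) acc) ws 1"

definition bullet_poly :: "(complex \<Rightarrow> 'a::comm_ring_1) \<Rightarrow> (T2 \<Rightarrow> 'a) \<Rightarrow> V0 \<Rightarrow> (mon \<Rightarrow>\<^sub>0 'a)" where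
  "bullet_poly iota s P = (\<Sum>\<alpha>\<in>Poly_Mapping.keys P. smultA (iota (Poly_Mapping.lookup P \<alpha>)) (bullet_word iota s (mon_word \<alpha>)))"

definition pderivA :: "nat \<Rightarrow> (mon \<Rightarrow>\<^sub>0 'a::comm_ring_1) \<Rightarrow> (mon \<Rightarrow>\<^sub>0 'a)" where
  "pderivA i F = (\<Sum>\<alpha>\<in>Poly_Mapping.keys F. Poly_Mapping.single (\<alpha> - Var i) (of_nat (Poly_Mapping.lookup \<alpha> i) * Poly_Mapping.lookup F \<alpha>))"

text \<open>Q_p = sum_{m,n} q_mn d^2/(dx_m dx_n), q_mn = r(x_m (x) x_n); the (formally infinite)
  sum has only finitely many nonzero terms on each element and is taken with Sum_any\<close>
definition Qp :: "(T2 \<Rightarrow> 'a::comm_ring_1) \<Rightarrow> (mon \<Rightarrow>\<^sub>0 'a) \<Rightarrow> (mon \<Rightarrow>\<^sub>0 'a)" where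
  "Qp r F = Sum_any (\<lambda>(m, n). smultA (r (tensor (xv m) (xv n))) (pderivA m (pderivA n F)))"

text \<open>e^{Q_p} = sum_k Q_p^k / k!  (finitely many nonzero terms on each element)\<close>
definition expQp :: "(complex \<Rightarrow> 'a::comm_ring_1) \<Rightarrow> (T2 \<Rightarrow> 'a) \<Rightarrow> (mon \<Rightarrow>\<^sub>0 'a) \<Rightarrow> (mon \<Rightarrow>\<^sub>0 'a)" where
  "expQp iota r F = Sum_any (\<lambda>k. smultA (iota (1 / of_nat (fact k))) ((Qp r ^^ k) F))"

text \<open>EQ_r(P) = sum r(P' (x) P'') P'''\<close>
definition EQ :: "(complex \<Rightarrow> 'a::comm_ring_1) \<Rightarrow> (T2 \<Rightarrow> 'a) \<Rightarrow> V0 \<Rightarrow> (mon \<Rightarrow>\<^sub>0 'a)" where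
  "EQ iota r P = (\<Sum>(u, v, w)\<in>Poly_Mapping.keys (delta2 P).
      smultA (iota (Poly_Mapping.lookup (delta2 P) (u, v, w)) * r (tensor (mono u) (mono v))) (embA iota (mono w)))"

end

theory Submission
  imports Defs
begin

abbreviation lk where "lk \<equiv> Poly_Mapping.lookup"
abbreviation ks where "ks \<equiv> Poly_Mapping.keys"
abbreviation sg where "sg \<equiv> Poly_Mapping.single"

lemma lookup_map': "lk (Poly_Mapping.map f p) k = (f (lk p k) when lk p k \<noteq> 0)"
  by transfer simp

lemma lookup_smultA[simp]: "lk (smultA c F) k = c * lk F k"
  by (simp add: smultA_def lookup_map' when_def)

lemma smultA_add: "smultA c (F + G) = smultA c F + smultA c G"
  by (rule poly_mapping_eqI) (simp add: lookup_add algebra_simps)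
lemma smultA_add2: "smultA (c + d) F = smultA c F + smultA d F"
  by (rule poly_mapping_eqI) (simp add: lookup_add algebra_simps)
lemma smultA_zero[simp]: "smultA c 0 = 0" "smultA 0 F = 0"
  by (rule poly_mapping_eqI, simp)+
lemma smultA_one[simp]: "smultA 1 F = F"
  by (rule poly_mapping_eqI, simp)
lemma smultA_smultA[simp]: "smultA c (smultA d F) = smultA (c * d) F"
  by (rule poly_mapping_eqI) (simp add: algebra_simps)
lemma smultA_sum: "smultA c (\<Sum>j\<in>J. F j) = (\<Sum>j\<in>J. smultA c (F j))"
  by (rule poly_mapping_eqI) (simp add: lookup_sum sum_distrib_left)
lemma smultA_sum2: "smultA (\<Sum>j\<in>J. c j) F = (\<Sum>j\<in>J. smultA (c j) F)"
  by (rule poly_mapping_eqI) (simp add: lookup_sum sum_distrib_right)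
lemma smultA_single[simp]: "smultA c (sg k a) = sg k (c * a)"
  by (rule poly_mapping_eqI) (simp add: lookup_single when_def)
lemma smultA_conv: "smultA c F = sg 0 c * F"
  unfolding smultA_def by (rule mult_map_scale_conv_mult)
lemma smultA_mult: "smultA c (F * G) = smultA c F * G" "smultA c (F * G) = F * smultA c G"
  by (simp_all add: smultA_conv algebra_simps)

lemma calg_hom_simps:
  assumes "calg_hom iota"
  shows "iota (x + y) = iota x + iota y" "iota (x * y) = iota x * iota y" "iota 1 = 1" "iota 0 = 0"
    "iota (of_nat n) = of_nat n" "iota (\<Sum>j\<in>J. f j) = (\<Sum>j\<in>J. iota (f j))"
proof -
  show a: "iota (x + y) = iota x + iota y" "iota (x * y) = iota x * iota y" "iota 1 = 1" for x y
    using assms unfolding calg_hom_def by auto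
  have "iota 0 + iota 0 = iota 0" using a(1)[of 0 0] by simp
  then show z: "iota 0 = 0" by simp
  show "iota (of_nat n) = of_nat n"
    by (induction n) (auto simp: z a(3) assms[unfolded calg_hom_def])
  show "iota (\<Sum>j\<in>J. f j) = (\<Sum>j\<in>J. iota (f j))"
    by (induction J rule: infinite_finite_induct) (auto simp: z assms[unfolded calg_hom_def])
qed

definition good_sc :: "(complex \<Rightarrow> 'v::ab_group_add \<Rightarrow> 'v) \<Rightarrow> bool" where
  "good_sc sc \<longleftrightarrow> (\<forall>c d v. sc (c + d) v = sc c v + sc d v) \<and> (\<forall>c v w. sc c (v + w) = sc c v + sc c w)
    \<and> (\<forall>c d v. sc (c * d) v = sc c (sc d v)) \<and> (\<forall>v. sc 1 v = v)"

lemma good_sc_simps: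
  assumes "good_sc sc"
  shows "sc (c + d) v = sc c v + sc d v" "sc c (v + w) = sc c v + sc c w"
    "sc (c * d) v = sc c (sc d v)" "sc 1 v = v" "sc 0 v = 0" "sc c 0 = 0"
    "sc c (sc d v) = sc d (sc c v)"
    "sc (\<Sum>j\<in>J. f j) v = (\<Sum>j\<in>J. sc (f j) v)"
    "sc c (\<Sum>j\<in>J. g j) = (\<Sum>j\<in>J. sc c (g j))"
proof -
  show a: "sc (c + d) v = sc c v + sc d v" "sc c (v + w) = sc c v + sc c w"
    "sc (c * d) v = sc c (sc d v)" "sc 1 v = v" for c d v w
    using assms unfolding good_sc_def by auto
  show z: "sc 0 v = 0" for v using a(1)[of 0 0 v] by simp
  show z2: "sc c 0 = 0" for c using a(2)[of c 0 0] by simp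
  show "sc c (sc d v) = sc d (sc c v)" by (metis a(3) mult.commute)
  show "sc (\<Sum>j\<in>J. f j) v = (\<Sum>j\<in>J. sc (f j) v)"
    by (induction J rule: infinite_finite_induct) (auto simp: z a)
  show "sc c (\<Sum>j\<in>J. g j) = (\<Sum>j\<in>J. sc c (g j))"
    by (induction J rule: infinite_finite_induct) (auto simp: z2 a)
qed

definition Lam :: "(complex \<Rightarrow> 'v::ab_group_add \<Rightarrow> 'v) \<Rightarrow> ('k \<Rightarrow> 'v) \<Rightarrow> ('k \<Rightarrow>\<^sub>0 complex) \<Rightarrow> 'v" where
  "Lam sc g T = (\<Sum>k\<in>ks T. sc (lk T k) (g k))"

context fixes sc :: "complex \<Rightarrow> 'v::ab_group_add \<Rightarrow> 'v" assumes gsc: "good_sc sc"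
begin

lemma Lam_superset:
  assumes "finite S" "ks T \<subseteq> S"
  shows "Lam sc g T = (\<Sum>k\<in>S. sc (lk T k) (g k))"
  unfolding Lam_def
  by (rule sum.mono_neutral_left) (use assms good_sc_simps(5)[OF gsc] in \<open>auto simp: in_keys_iff\<close>)

lemma Lam_add: "Lam sc g (T1 + T2) = Lam sc g T1 + Lam sc g T2"
proof -
  let ?S = "ks T1 \<union> ks T2"
  have "Lam sc g (T1 + T2) = (\<Sum>k\<in>?S. sc (lk (T1 + T2) k) (g k))"
    by (rule Lam_superset) (use keys_add[of T1 T2] in auto)
  also have "\<dots> = (\<Sum>k\<in>?S. sc (lk T1 k) (g k)) + (\<Sum>k\<in>?S. sc (lk T2 k) (g k))"
    by (simp add: lookup_add good_sc_simps[OF gsc] sum.distrib)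
  also have "\<dots> = Lam sc g T1 + Lam sc g T2"
    by (subst (1 2) Lam_superset[where S="?S"]) auto
  finally show ?thesis .
qed

lemma Lam_zero[simp]: "Lam sc g 0 = 0"
  by (simp add: Lam_def)

lemma Lam_sum: "Lam sc g (\<Sum>j\<in>J. T j) = (\<Sum>j\<in>J. Lam sc g (T j))"
  by (induction J rule: infinite_finite_induct) (auto simp: Lam_add)

lemma Lam_single[simp]: "Lam sc g (sg k c) = sc c (g k)"
  by (simp add: Lam_def good_sc_simps[OF gsc])

lemma Lam_cong: "(\<And>k. k \<in> ks T \<Longrightarrow> g k = g' k) \<Longrightarrow> Lam sc g T = Lam sc g' T"
  unfolding Lam_def by (rule sum.cong) auto

lemma Lam_gadd: "Lam sc (\<lambda>k. g1 k + g2 k) T = Lam sc g1 T + Lam sc g2 T"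
  by (simp add: Lam_def good_sc_simps[OF gsc] sum.distrib)

lemma Lam_gsum: "Lam sc (\<lambda>k. \<Sum>j\<in>J. g j k) T = (\<Sum>j\<in>J. Lam sc (g j) T)"
  unfolding Lam_def by (simp add: good_sc_simps[OF gsc]) (rule sum.swap)

lemma Lam_op:
  assumes "\<And>x y. \<phi> (x + y) = \<phi> x + \<phi> y" "\<And>c v. \<phi> (sc c v) = sc c (\<phi> v)"
  shows "\<phi> (Lam sc g T) = Lam sc (\<lambda>k. \<phi> (g k)) T"
proof -
  have z: "\<phi> 0 = 0" using assms(1)[of 0 0] by simp
  have "\<phi> (\<Sum>k\<in>A. sc (lk T k) (g k)) = (\<Sum>k\<in>A. \<phi> (sc (lk T k) (g k)))" for A
    by (induction A rule: infinite_finite_induct) (auto simp: z assms(1))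
  then show ?thesis unfolding Lam_def by (simp add: assms(2))
qed

lemma Lam_scale: "Lam sc (\<lambda>k. sc c (g k)) T = sc c (Lam sc g T)"
  by (rule Lam_op[symmetric]) (auto simp: good_sc_simps[OF gsc])

lemma Lam_map: "Lam sc g (Poly_Mapping.map (\<lambda>z. c * z) T) = sc c (Lam sc g T)"
proof -
  have "Lam sc g (Poly_Mapping.map (\<lambda>z. c * z) T) = (\<Sum>k\<in>ks T. sc (lk (Poly_Mapping.map (\<lambda>z. c * z) T) k) (g k))"
    by (rule Lam_superset) (auto simp: in_keys_iff lookup_map' when_def)
  also have "\<dots> = (\<Sum>k\<in>ks T. sc c (sc (lk T k) (g k)))"
    by (rule sum.cong) (auto simp: lookup_map' when_def good_sc_simps[OF gsc])
  finally show ?thesis by (simp add: Lam_def good_sc_simps[OF gsc])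
qed

end

lemma pm_expand: "(T::'k \<Rightarrow>\<^sub>0 'b::comm_monoid_add) = (\<Sum>k\<in>ks T. sg k (lk T k))"
  by (rule poly_mapping_eqI) (auto simp: lookup_sum lookup_single when_def in_keys_iff)

lemma Lam_mult_single:
  fixes T :: "'k::comm_monoid_add \<Rightarrow>\<^sub>0 complex"
  assumes gsc: "good_sc sc"
  shows "Lam sc g (T * sg d c) = sc c (Lam sc (\<lambda>k. g (k + d)) T)"
proof -
  have "T * sg d c = (\<Sum>k\<in>ks T. sg (k + d) (lk T k * c))"
    by (subst pm_expand[of T]) (simp add: sum_distrib_right mult_single)
  then have "Lam sc g (T * sg d c) = (\<Sum>k\<in>ks T. sc (lk T k * c) (g (k + d)))"
    by (simp add: Lam_sum[OF gsc] Lam_single[OF gsc])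
  also have "\<dots> = sc c (Lam sc (\<lambda>k. g (k + d)) T)"
    by (simp add: Lam_def good_sc_simps[OF gsc] mult.commute)
  finally show ?thesis .
qed

definition scA :: "(complex \<Rightarrow> 'a::comm_ring_1) \<Rightarrow> complex \<Rightarrow> 'a \<Rightarrow> 'a" where
  "scA iota c x = iota c * x"
definition scK :: "(complex \<Rightarrow> 'a::comm_ring_1) \<Rightarrow> complex \<Rightarrow> (mon \<Rightarrow>\<^sub>0 'a) \<Rightarrow> (mon \<Rightarrow>\<^sub>0 'a)" where
  "scK iota c F = smultA (iota c) F"

lemma good_scA: "calg_hom iota \<Longrightarrow> good_sc (scA iota)"
  by (simp add: good_sc_def scA_def calg_hom_simps algebra_simps)
lemma good_scK: "calg_hom iota \<Longrightarrow> good_sc (scK iota)"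
  by (simp add: good_sc_def scK_def calg_hom_simps smultA_add smultA_add2)


lemma lookup_Var: "lk (Var i) j = (if j = i then 1 else 0)"
  by (simp add: Var_def lookup_single when_def)

lemma keys_Var[simp]: "ks (Var i) = {i}" by (simp add: Var_def)

lemma Var_neq0[simp]: "Var i \<noteq> 0" "0 \<noteq> Var i"
  by (metis keys_Var keys_zero empty_not_insert)+

lemma Var_inj[simp]: "Var n = Var m \<longleftrightarrow> n = m"
  by (metis keys_Var singleton_inject)

lemma mono_mult: "mono a * mono b = mono (a + b)"
  by (simp add: mono_def mult_single)

lemma mono_0: "mono 0 = 1" by (simp add: mono_def)

lemma keys_mono[simp]: "ks (mono a) = {a}" by (simp add: mono_def)
lemma lookup_mono: "lk (mono a) b = (if b = a then 1 else 0)"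
  by (simp add: mono_def lookup_single when_def)

lemma tensor_mono: "tensor (mono a) (mono b) = sg (a, b) 1"
  by (simp add: tensor_def lookup_mono)

lemma tensor_mono_1: "tensor (mono a) 1 = sg (a, 0) 1" "tensor 1 (mono b) = sg (0, b) 1"
  by (simp_all add: tensor_mono flip: mono_0)

definition DD :: "nat \<Rightarrow> T2" where "DD i = sg (Var i, 0) 1 + sg (0, Var i) 1"

lemma map_one_id: "Poly_Mapping.map (\<lambda>z. (1::complex) * z) D = D"
  by (rule poly_mapping_eqI) (simp add: lookup_map' when_def)

lemma map_id': "Poly_Mapping.map (\<lambda>z. z) D = D"
  by (rule poly_mapping_eqI) (simp add: lookup_map' when_def)

lemma delta_mono: "delta (mono a) = delta_mon a"
  by (simp add: delta_def lookup_mono map_id')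

lemma DD_eq: "tensor (xv i) 1 + tensor 1 (xv i) = DD i"
  by (simp add: xv_def tensor_mono_1 DD_def)

lemma delta_mon_superset:
  assumes "finite S" "ks a \<subseteq> S"
  shows "delta_mon a = (\<Prod>i\<in>S. DD i ^ lk a i)"
  unfolding delta_mon_def DD_eq
  by (rule prod.mono_neutral_left) (use assms in \<open>auto simp: in_keys_iff\<close>)

lemma delta_mon_0: "delta_mon 0 = 1"
  by (simp add: delta_mon_def)

lemma delta_mon_step: "delta_mon (a + Var i) = delta_mon a * DD i"
proof -
  let ?S = "insert i (ks a)"
  have "delta_mon (a + Var i) = (\<Prod>j\<in>?S. DD j ^ lk (a + Var i) j)"
    by (rule delta_mon_superset) (use keys_add[of a "Var i"] in auto)
  also have "\<dots> = (\<Prod>j\<in>?S. DD j ^ lk a j * DD j ^ (if j = i then 1 else 0))"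
    by (simp add: lookup_add lookup_Var power_add)
  also have "\<dots> = (\<Prod>j\<in>?S. DD j ^ lk a j) * (\<Prod>j\<in>?S. DD j ^ (if j = i then 1 else 0))"
    by (rule prod.distrib)
  also have "(\<Prod>j\<in>?S. DD j ^ (if j = i then 1 else 0)) = DD i"
    by (subst prod.remove[of _ i]) (auto intro!: prod.neutral)
  also have "(\<Prod>j\<in>?S. DD j ^ lk a j) = delta_mon a"
    by (rule delta_mon_superset[symmetric]) auto
  finally show ?thesis .
qed

definition tdeg :: "mon \<Rightarrow> nat" where "tdeg a = (\<Sum>i\<in>ks a. lk a i)"

lemma tdeg_superset: "finite S \<Longrightarrow> ks a \<subseteq> S \<Longrightarrow> tdeg a = (\<Sum>i\<in>S. lk a i)"
  unfolding tdeg_def by (rule sum.mono_neutral_left) (auto simp: in_keys_iff)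

lemma tdeg_add: "tdeg (a + b) = tdeg a + tdeg b"
proof -
  let ?S = "ks a \<union> ks b"
  have "tdeg (a + b) = (\<Sum>i\<in>?S. lk (a + b) i)"
    by (rule tdeg_superset) (use keys_add[of a b] in auto)
  also have "\<dots> = (\<Sum>i\<in>?S. lk a i) + (\<Sum>i\<in>?S. lk b i)"
    by (simp add: lookup_add sum.distrib)
  also have "\<dots> = tdeg a + tdeg b"
    by (subst (1 2) tdeg_superset[where S="?S"]) auto
  finally show ?thesis .
qed

lemma tdeg_Var[simp]: "tdeg (Var i) = 1" by (simp add: tdeg_def lookup_Var)
lemma tdeg_0[simp]: "tdeg 0 = 0" by (simp add: tdeg_def)

lemma Var_split: "i \<in> ks a \<Longrightarrow> a = (a - Var i) + Var i"
  by (rule poly_mapping_eqI) (auto simp: lookup_add lookup_minus lookup_Var in_keys_iff)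

lemma mon_induct[case_names zero step]:
  assumes "P 0" "\<And>a i. P a \<Longrightarrow> P (a + Var i)"
  shows "P a"
proof (induction "tdeg a" arbitrary: a)
  case 0
  then have "a = 0" by (auto simp: tdeg_def intro!: poly_mapping_eqI) (metis in_keys_iff)
  then show ?case using assms by simp
next
  case (Suc n)
  then have "a \<noteq> 0" by auto
  then obtain i where i: "i \<in> ks a" by (metis keys_eq_empty ex_in_conv)
  let ?b = "a - Var i"
  have e: "a = ?b + Var i" using Var_split[OF i] .
  then have "tdeg ?b = n" using Suc(2) tdeg_add[of ?b "Var i"] by simp
  then have "P ?b" using Suc(1) by simp
  then show ?case using assms(2) e by metis
qed

lemma add_Var_minus: "a + Var i - Var i = a"
  by (rule poly_mapping_eqI) (simp add: lookup_add lookup_minus lookup_Var)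

lemma minus_Var_add: "lk a i \<noteq> 0 \<Longrightarrow> a - Var i + Var i = a"
  by (metis Var_split in_keys_iff)

lemma Var_swap: "n \<noteq> i \<Longrightarrow> a + Var i - Var n = a - Var n + Var i"
  by (rule poly_mapping_eqI) (simp add: lookup_add lookup_minus lookup_Var)

lemma minus_Var_add': "lk a i \<noteq> 0 \<Longrightarrow> Var i + (a - Var i) = a"
  by (metis minus_Var_add add.commute)

lemma add_eq_Var: "u + Var i = Var n \<longleftrightarrow> u = 0 \<and> i = n"
proof
  assume h: "u + Var i = Var n"
  have "lk (u + Var i) i = lk (Var n) i" using h by simp
  then have "i = n" by (auto simp: lookup_add lookup_Var split: if_splits)
  with h have "u = 0" by (metis add_Var_minus add_0)
  with \<open>i = n\<close> show "u = 0 \<and> i = n" by simp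
qed auto

lemma add_eq_0_mon: "(u::mon) + v = 0 \<longleftrightarrow> u = 0 \<and> v = 0"
  by (auto simp: poly_mapping_eq_iff lookup_add fun_eq_iff)

lemma keys_delta_mon: "ks (delta_mon a) \<subseteq> {(u, w). u + w = a}"
proof (induction a rule: mon_induct)
  case zero then show ?case by (simp add: delta_mon_0 zero_prod_def)
next
  case (step a i)
  have kd: "ks (DD i) \<subseteq> {(Var i, 0), (0, Var i)}"
    unfolding DD_def using keys_add[of "sg (Var i, 0) (1::complex)" "sg (0, Var i) 1"] by auto
  show ?case unfolding delta_mon_step
    using keys_mult[of "delta_mon a" "DD i"] step kd by (fastforce simp: add.assoc add.commute add.left_commute)
qed

context fixes sc :: "complex \<Rightarrow> 'v::ab_group_add \<Rightarrow> 'v" assumes gsc: "good_sc sc"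
begin

lemma Lam_D0: "Lam sc g (delta_mon 0) = g (0, 0)"
  by (simp add: delta_mon_0 Lam_single[OF gsc] good_sc_simps[OF gsc] flip: single_one zero_prod_def)

lemma add_pair_split: "k + (a, b) = (fst k + a, snd k + b)" by (cases k) simp

lemma Lam_DD: "Lam sc g (T * DD i) = Lam sc (\<lambda>(u, w). g (u + Var i, w)) T + Lam sc (\<lambda>(u, w). g (u, w + Var i)) T"
  unfolding DD_def distrib_left
  by (simp add: Lam_add[OF gsc] Lam_mult_single[OF gsc] good_sc_simps[OF gsc] split_def add_pair_split)

lemma Lam_Dstep: "Lam sc g (delta_mon (a + Var i)) =
   Lam sc (\<lambda>(u, w). g (u + Var i, w)) (delta_mon a) + Lam sc (\<lambda>(u, w). g (u, w + Var i)) (delta_mon a)"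
  by (simp add: delta_mon_step Lam_DD)

end

context fixes sc :: "complex \<Rightarrow> 'v::ab_group_add \<Rightarrow> 'v" assumes gsc: "good_sc sc"
begin

lemma Lam_zero_fun[simp]: "Lam sc (\<lambda>k. 0) T = 0"
  by (simp add: Lam_def good_sc_simps[OF gsc])

lemma Lam_zero_fun2[simp]: "Lam sc (\<lambda>(u, w). 0) T = 0"
  by (simp add: Lam_def good_sc_simps[OF gsc] split_def)

lemma sc_of_nat_plus1: "sc (of_nat (k + 1)) v = sc (of_nat k) v + v"
  by (simp add: good_sc_simps[OF gsc])

lemma sc_of_nat_Suc: "sc (of_nat (Suc k)) v = sc (of_nat k) v + v"
  by (simp add: good_sc_simps[OF gsc])

lemma delta_mon_Var: "delta_mon (Var i) = DD i"
  using delta_mon_step[of 0 i] by (simp add: delta_mon_0)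

lemma Lam_DVar: "Lam sc g (delta_mon (Var i)) = g (Var i, 0) + g (0, Var i)"
  using Lam_Dstep[OF gsc, of g 0 i] by (simp add: Lam_D0[OF gsc])

lemma Lam_Dc: "Lam sc (\<lambda>(u, w). if w = 0 then f u else 0) (delta_mon a) = f a"
proof (induction a arbitrary: f rule: mon_induct)
  case zero then show ?case by (simp add: Lam_D0[OF gsc])
next
  case (step a i)
  have "Lam sc (\<lambda>(u, w). if w = 0 then f u else 0) (delta_mon (a + Var i)) =
        Lam sc (\<lambda>(u, w). if w = 0 then f (u + Var i) else 0) (delta_mon a)"
    by (simp add: Lam_Dstep[OF gsc] add_eq_0_mon)
  also have "\<dots> = f (a + Var i)" using step[of "\<lambda>u. f (u + Var i)"] by simp
  finally show ?case .
qed

lemma Lam_Dc': "Lam sc (\<lambda>(u, w). if u = 0 then f w else 0) (delta_mon a) = f a"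
proof (induction a arbitrary: f rule: mon_induct)
  case zero then show ?case by (simp add: Lam_D0[OF gsc])
next
  case (step a i)
  have "Lam sc (\<lambda>(u, w). if u = 0 then f w else 0) (delta_mon (a + Var i)) =
        Lam sc (\<lambda>(u, w). if u = 0 then f (w + Var i) else 0) (delta_mon a)"
    by (simp add: Lam_Dstep[OF gsc] add_eq_0_mon)
  also have "\<dots> = f (a + Var i)" using step[of "\<lambda>u. f (u + Var i)"] by simp
  finally show ?case .
qed

lemma Lam_D1: "Lam sc (\<lambda>(u, w). if u = Var n then f w else 0) (delta_mon a) = sc (of_nat (lk a n)) (f (a - Var n))"
proof (induction a arbitrary: f rule: mon_induct)
  case zero then show ?case by (simp add: Lam_D0[OF gsc] good_sc_simps[OF gsc])
next
  case (step a i)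
  have "Lam sc (\<lambda>(u, w). if u = Var n then f w else 0) (delta_mon (a + Var i)) =
        Lam sc (\<lambda>(u, w). if i = n then (if u = 0 then f w else 0) else 0) (delta_mon a) +
        Lam sc (\<lambda>(u, w). if u = Var n then f (w + Var i) else 0) (delta_mon a)"
    unfolding Lam_Dstep[OF gsc] by (intro arg_cong2[where f="(+)"] Lam_cong[OF gsc]) (auto simp: add_eq_Var)
  also have "\<dots> = (if i = n then f a else 0) + sc (of_nat (lk a n)) (f (a - Var n + Var i))"
    using step[of "\<lambda>w. f (w + Var i)"] Lam_Dc'[of f a] by (cases "i = n") auto
  also have "\<dots> = sc (of_nat (lk (a + Var i) n)) (f (a + Var i - Var n))"
  proof (cases "i = n")
    case True
    then show ?thesis
      by (cases "lk a n = 0") (simp_all add: lookup_add lookup_Var add_Var_minus minus_Var_add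
          good_sc_simps(1,4,5)[OF gsc] add.commute minus_Var_add')
  next
    case False
    then show ?thesis by (simp add: lookup_add lookup_Var Var_swap)
  qed
  finally show ?case .
qed

lemma Lam_D1': "Lam sc (\<lambda>(u, w). if w = Var n then f u else 0) (delta_mon a) = sc (of_nat (lk a n)) (f (a - Var n))"
proof (induction a arbitrary: f rule: mon_induct)
  case zero then show ?case by (simp add: Lam_D0[OF gsc] good_sc_simps[OF gsc])
next
  case (step a i)
  have "Lam sc (\<lambda>(u, w). if w = Var n then f u else 0) (delta_mon (a + Var i)) =
        Lam sc (\<lambda>(u, w). if w = Var n then f (u + Var i) else 0) (delta_mon a) +
        Lam sc (\<lambda>(u, w). if i = n then (if w = 0 then f u else 0) else 0) (delta_mon a)"
    unfolding Lam_Dstep[OF gsc] by (intro arg_cong2[where f="(+)"] Lam_cong[OF gsc]) (auto simp: add_eq_Var)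
  also have "\<dots> = sc (of_nat (lk a n)) (f (a - Var n + Var i)) + (if i = n then f a else 0)"
    using step[of "\<lambda>w. f (w + Var i)"] Lam_Dc[of f a] by (cases "i = n") auto
  also have "\<dots> = sc (of_nat (lk (a + Var i) n)) (f (a + Var i - Var n))"
  proof (cases "i = n")
    case True
    then show ?thesis
      by (cases "lk a n = 0") (simp_all add: lookup_add lookup_Var add_Var_minus minus_Var_add
          good_sc_simps(1,4,5)[OF gsc] add.commute minus_Var_add')
  next
    case False
    then show ?thesis by (simp add: lookup_add lookup_Var Var_swap)
  qed
  finally show ?case .
qed

lemma aux_shift:
  "sc (of_nat (lk (u + Var i) n)) (h (u + Var i - Var n)) =
   sc (of_nat (lk u n)) (h (u - Var n + Var i)) + (if i = n then h u else 0)"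
proof (cases "i = n")
  case True
  then show ?thesis
    by (cases "lk u n = 0") (simp_all add: lookup_add lookup_Var add_Var_minus minus_Var_add
          good_sc_simps(1,4,5)[OF gsc] add.commute minus_Var_add')
next
  case False
  then show ?thesis by (simp add: lookup_add lookup_Var Var_swap)
qed

lemma aux_shift2:
  "sc (of_nat (lk (a + Var i) n)) (h (a + Var i - Var n)) =
   sc (of_nat (lk a n)) (h (a - Var n + Var i)) + (if i = n then h a else 0)"
  by (rule aux_shift)

lemma Lam_Dd: "Lam sc (\<lambda>(u, w). sc (of_nat (lk u n)) (f (u - Var n) w)) (delta_mon a) =
   sc (of_nat (lk a n)) (Lam sc (\<lambda>(u, w). f u w) (delta_mon (a - Var n)))"
proof (induction a arbitrary: f rule: mon_induct)
  case zero then show ?case by (simp add: Lam_D0[OF gsc] good_sc_simps[OF gsc])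
next
  case (step a i)
  have "Lam sc (\<lambda>(u, w). sc (of_nat (lk u n)) (f (u - Var n) w)) (delta_mon (a + Var i)) =
        Lam sc (\<lambda>(u, w). sc (of_nat (lk (u + Var i) n)) (f (u + Var i - Var n) w)) (delta_mon a) +
        Lam sc (\<lambda>(u, w). sc (of_nat (lk u n)) (f (u - Var n) (w + Var i))) (delta_mon a)"
    unfolding Lam_Dstep[OF gsc] by simp
  also have "Lam sc (\<lambda>(u, w). sc (of_nat (lk (u + Var i) n)) (f (u + Var i - Var n) w)) (delta_mon a) =
     Lam sc (\<lambda>(u, w). sc (of_nat (lk u n)) (f (u - Var n + Var i) w)) (delta_mon a) +
     Lam sc (\<lambda>(u, w). if i = n then f u w else 0) (delta_mon a)"
    using aux_shift[of _ i n "\<lambda>u. f u _"]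
    by (simp add: Lam_gadd[OF gsc, symmetric] split_def)
  also have "Lam sc (\<lambda>(u, w). if i = n then f u w else 0) (delta_mon a) =
     (if i = n then Lam sc (\<lambda>(u, w). f u w) (delta_mon a) else 0)"
    by (cases "i = n") simp_all
  finally have "Lam sc (\<lambda>(u, w). sc (of_nat (lk u n)) (f (u - Var n) w)) (delta_mon (a + Var i)) =
     sc (of_nat (lk a n)) (Lam sc (\<lambda>(u, w). f (u + Var i) w) (delta_mon (a - Var n))) +
     (if i = n then Lam sc (\<lambda>(u, w). f u w) (delta_mon a) else 0) +
     sc (of_nat (lk a n)) (Lam sc (\<lambda>(u, w). f u (w + Var i)) (delta_mon (a - Var n)))"
    using step[of "\<lambda>u w. f (u + Var i) w"] step[of "\<lambda>u w. f u (w + Var i)"] by simp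
  also have "\<dots> = sc (of_nat (lk a n)) (Lam sc (\<lambda>(u, w). f u w) (delta_mon (a - Var n + Var i))) +
     (if i = n then Lam sc (\<lambda>(u, w). f u w) (delta_mon a) else 0)"
    by (simp add: Lam_Dstep[OF gsc] good_sc_simps(2)[OF gsc] add.assoc)
  also have "\<dots> = sc (of_nat (lk (a + Var i) n)) (Lam sc (\<lambda>(u, w). f u w) (delta_mon (a + Var i - Var n)))"
    by (rule aux_shift2[symmetric])
  finally show ?case .
qed

lemma Lam_Dd': "Lam sc (\<lambda>(u, w). sc (of_nat (lk w n)) (f u (w - Var n))) (delta_mon a) =
   sc (of_nat (lk a n)) (Lam sc (\<lambda>(u, w). f u w) (delta_mon (a - Var n)))"
proof (induction a arbitrary: f rule: mon_induct)
  case zero then show ?case by (simp add: Lam_D0[OF gsc] good_sc_simps[OF gsc])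
next
  case (step a i)
  have "Lam sc (\<lambda>(u, w). sc (of_nat (lk w n)) (f u (w - Var n))) (delta_mon (a + Var i)) =
        Lam sc (\<lambda>(u, w). sc (of_nat (lk w n)) (f (u + Var i) (w - Var n))) (delta_mon a) +
        Lam sc (\<lambda>(u, w). sc (of_nat (lk (w + Var i) n)) (f u (w + Var i - Var n))) (delta_mon a)"
    unfolding Lam_Dstep[OF gsc] by simp
  also have "Lam sc (\<lambda>(u, w). sc (of_nat (lk (w + Var i) n)) (f u (w + Var i - Var n))) (delta_mon a) =
     Lam sc (\<lambda>(u, w). sc (of_nat (lk w n)) (f u (w - Var n + Var i))) (delta_mon a) +
     Lam sc (\<lambda>(u, w). if i = n then f u w else 0) (delta_mon a)"
    using aux_shift[of _ i n "f _"]
    by (simp add: Lam_gadd[OF gsc, symmetric] split_def)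
  also have "Lam sc (\<lambda>(u, w). if i = n then f u w else 0) (delta_mon a) =
     (if i = n then Lam sc (\<lambda>(u, w). f u w) (delta_mon a) else 0)"
    by (cases "i = n") simp_all
  finally have "Lam sc (\<lambda>(u, w). sc (of_nat (lk w n)) (f u (w - Var n))) (delta_mon (a + Var i)) =
     sc (of_nat (lk a n)) (Lam sc (\<lambda>(u, w). f (u + Var i) w) (delta_mon (a - Var n))) +
     (sc (of_nat (lk a n)) (Lam sc (\<lambda>(u, w). f u (w + Var i)) (delta_mon (a - Var n))) +
     (if i = n then Lam sc (\<lambda>(u, w). f u w) (delta_mon a) else 0))"
    using step[of "\<lambda>u w. f (u + Var i) w"] step[of "\<lambda>u w. f u (w + Var i)"] by simp
  also have "\<dots> = sc (of_nat (lk a n)) (Lam sc (\<lambda>(u, w). f u w) (delta_mon (a - Var n + Var i))) +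
     (if i = n then Lam sc (\<lambda>(u, w). f u w) (delta_mon a) else 0)"
    by (simp add: Lam_Dstep[OF gsc] good_sc_simps(2)[OF gsc] add.assoc)
  also have "\<dots> = sc (of_nat (lk (a + Var i) n)) (Lam sc (\<lambda>(u, w). f u w) (delta_mon (a + Var i - Var n)))"
    by (rule aux_shift2[symmetric])
  finally show ?case .
qed

end

lemma sw2_Lam: "sw2 iota f T = Lam (scA iota) (\<lambda>(u, v). f (mono u) (mono v)) T"
  by (simp add: sw2_def Lam_def scA_def split_def)

lemma lin_ext_Lam: "lin_ext iota f T = Lam (scA iota) (\<lambda>(m, n). f m n) T"
  by (simp add: lin_ext_def Lam_def scA_def split_def)

lemma xv_mult: "xv i * mono a = mono (a + Var i)"
  by (simp add: xv_def mono_mult add.commute)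

locale thm_ctx =
  fixes iota :: "complex \<Rightarrow> 'a::comm_ring_1" and r :: "T2 \<Rightarrow> 'a"
  assumes hom: "calg_hom iota" and bic: "bicharacter iota r"
begin

lemmas io = calg_hom_simps[OF hom]
lemmas gA = good_scA[OF hom]
declare io(3-5)[simp]
lemmas gK = good_scK[OF hom]

lemma scA_simp[simp]: "scA iota c x = iota c * x" by (simp add: scA_def)
lemma scA_of_nat[simp]: "scA iota (of_nat k) x = of_nat k * x" by (simp add: io)

definition R :: "mon \<Rightarrow> mon \<Rightarrow> 'a" where "R a b = r (tensor (mono a) (mono b))"
definition q :: "nat \<Rightarrow> nat \<Rightarrow> 'a" where "q i n = R (Var i) (Var n)"

lemma counit_mono: "counit (mono b) = (if b = 0 then 1 else 0)"
  by (simp add: counit_def lookup_mono)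

lemma R_0_left: "R 0 b = (if b = 0 then 1 else 0)"
  using bic unfolding bicharacter_def R_def by (simp add: mono_0 counit_mono io)
lemma R_0_right: "R a 0 = (if a = 0 then 1 else 0)"
  using bic unfolding bicharacter_def R_def by (simp add: mono_0 counit_mono io)

lemma bic3: "r (tensor (a * b) c) = sw2 iota (\<lambda>c1 c2. r (tensor a c1) * r (tensor b c2)) (delta c)"
  using bic unfolding bicharacter_def by blast
lemma bic4: "r (tensor a (b * c)) = sw2 iota (\<lambda>a1 a2. r (tensor a1 b) * r (tensor a2 c)) (delta a)"
  using bic unfolding bicharacter_def by blast

lemma R_step_left_raw: "R (a + Var i) b = Lam (scA iota) (\<lambda>(c1, c2). R (Var i) c1 * R a c2) (delta_mon b)"
  unfolding R_def by (simp add: xv_mult[symmetric] bic3 sw2_Lam delta_mono xv_def)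

lemma R_step_right_raw: "R b (a + Var i) = Lam (scA iota) (\<lambda>(c1, c2). R c1 (Var i) * R c2 a) (delta_mon b)"
  unfolding R_def by (simp add: xv_mult[symmetric] bic4 sw2_Lam delta_mono xv_def)

lemma R_Var_left_nz: "R (Var i) c \<noteq> 0 \<Longrightarrow> \<exists>n. c = Var n"
proof (rule ccontr)
  assume nz: "R (Var i) c \<noteq> 0" and nv: "\<nexists>n. c = Var n"
  have "c \<noteq> 0" using nz by (auto simp: R_0_right)
  then obtain j where j: "j \<in> ks c" by (metis keys_eq_empty ex_in_conv)
  let ?c = "c - Var j"
  have e: "c = ?c + Var j" using Var_split[OF j] .
  have "?c \<noteq> 0" using nv e by (metis add_0)
  have "R (Var i) c = Lam (scA iota) (\<lambda>(c1, c2). R c1 (Var j) * R c2 ?c) (delta_mon (0 + Var i))"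
    by (subst e) (simp add: R_step_right_raw)
  also have "\<dots> = 0"
    using \<open>?c \<noteq> 0\<close> by (simp add: Lam_DVar[OF gA] R_0_left R_0_right)
  finally show False using nz by simp
qed

lemma R_Var_right_nz: "R c (Var i) \<noteq> 0 \<Longrightarrow> \<exists>n. c = Var n"
proof (rule ccontr)
  assume nz: "R c (Var i) \<noteq> 0" and nv: "\<nexists>n. c = Var n"
  have "c \<noteq> 0" using nz by (auto simp: R_0_left)
  then obtain j where j: "j \<in> ks c" by (metis keys_eq_empty ex_in_conv)
  let ?c = "c - Var j"
  have e: "c = ?c + Var j" using Var_split[OF j] .
  have "?c \<noteq> 0" using nv e by (metis add_0)
  have "R c (Var i) = Lam (scA iota) (\<lambda>(c1, c2). R (Var j) c1 * R ?c c2) (delta_mon (0 + Var i))"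
    by (subst e) (simp add: R_step_left_raw)
  also have "\<dots> = 0"
    using \<open>?c \<noteq> 0\<close> by (simp add: Lam_DVar[OF gA] R_0_left R_0_right)
  finally show False using nz by simp
qed

lemma le_keys: "(u, w) \<in> ks (delta_mon b) \<Longrightarrow> ks u \<subseteq> ks b"
  using keys_delta_mon[of b] by (auto simp: in_keys_iff lookup_add)
lemma le_keys2: "(u, w) \<in> ks (delta_mon b) \<Longrightarrow> ks w \<subseteq> ks b"
  using keys_delta_mon[of b] by (auto simp: in_keys_iff lookup_add)

lemma sum_Var_sel:
  assumes "ks u \<subseteq> S" "finite S"
  shows "(\<Sum>n\<in>S. if u = Var n then g n else 0) = (if \<exists>n. u = Var n then g (THE n. u = Var n) else 0)"
proof (cases "\<exists>n. u = Var n")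
  case True
  then obtain m where m: "u = Var m" by blast
  have inj: "Var n = Var m \<longleftrightarrow> n = m" for n by simp
  have "m \<in> S" using assms m by auto
  then have "(\<Sum>n\<in>S. if u = Var n then g n else 0) = g m"
    using assms(2) by (simp add: m inj sum.delta')
  moreover have "(THE n. u = Var n) = m" using m inj by auto
  ultimately show ?thesis using True by simp
qed simp

lemma R_step_left: "R (a + Var i) b = (\<Sum>n\<in>ks b. of_nat (lk b n) * (q i n * R a (b - Var n)))"
proof -
  have "R (a + Var i) b = Lam (scA iota) (\<lambda>(c1, c2). \<Sum>n\<in>ks b. if c1 = Var n then q i n * R a c2 else 0) (delta_mon b)"
  proof (unfold R_step_left_raw, rule Lam_cong[OF gA], clarify)
    fix c1 c2 assume k: "(c1, c2) \<in> ks (delta_mon b)"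
    show "R (Var i) c1 * R a c2 = (\<Sum>n\<in>ks b. if c1 = Var n then q i n * R a c2 else 0)"
      using R_Var_left_nz[of i c1] sum_Var_sel[OF le_keys[OF k], of "\<lambda>n. q i n * R a c2"]
      by (cases "R (Var i) c1 = 0") (auto simp: q_def)
  qed
  also have "\<dots> = (\<Sum>n\<in>ks b. Lam (scA iota) (\<lambda>(c1, c2). if c1 = Var n then q i n * R a c2 else 0) (delta_mon b))"
    by (subst Lam_gsum[OF gA, symmetric]) (simp add: split_def)
  also have "\<dots> = (\<Sum>n\<in>ks b. of_nat (lk b n) * (q i n * R a (b - Var n)))"
    by (simp add: Lam_D1[OF gA])
  finally show ?thesis .
qed

lemma R_step_right: "R b (a + Var i) = (\<Sum>n\<in>ks b. of_nat (lk b n) * (q n i * R (b - Var n) a))"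
proof -
  have "R b (a + Var i) = Lam (scA iota) (\<lambda>(c1, c2). \<Sum>n\<in>ks b. if c1 = Var n then q n i * R c2 a else 0) (delta_mon b)"
  proof (unfold R_step_right_raw, rule Lam_cong[OF gA], clarify)
    fix c1 c2 assume k: "(c1, c2) \<in> ks (delta_mon b)"
    show "R c1 (Var i) * R c2 a = (\<Sum>n\<in>ks b. if c1 = Var n then q n i * R c2 a else 0)"
      using R_Var_right_nz[of c1 i] sum_Var_sel[OF le_keys[OF k], of "\<lambda>n. q n i * R c2 a"]
      by (cases "R c1 (Var i) = 0") (auto simp: q_def)
  qed
  also have "\<dots> = (\<Sum>n\<in>ks b. Lam (scA iota) (\<lambda>(c1, c2). if c1 = Var n then q n i * R c2 a else 0) (delta_mon b))"
    by (subst Lam_gsum[OF gA, symmetric]) (simp add: split_def)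
  also have "\<dots> = (\<Sum>n\<in>ks b. of_nat (lk b n) * (q n i * R (b - Var n) a))"
    by (simp add: Lam_D1[OF gA])
  finally show ?thesis .
qed

end

context thm_ctx begin

definition S :: "mon \<Rightarrow> mon \<Rightarrow> 'a" where "S a b = symmetrization iota r (tensor (mono a) (mono b))"
definition sq :: "nat \<Rightarrow> nat \<Rightarrow> 'a" where "sq i n = q i n + q n i"

lemma Lam_single_A: "Lam (scA iota) g (sg k 1) = g k"
  by (simp add: Lam_single[OF gA])

lemma S_unfold: "S a b = Lam (scA iota) (\<lambda>(a1, a2). Lam (scA iota) (\<lambda>(b1, b2). R a1 b1 * R b2 a2) (delta_mon b)) (delta_mon a)"
  unfolding S_def symmetrization_def conv_def transp_def
  by (simp add: tensor_mono lin_ext_Lam sw2_Lam Lam_single_A delta_mono R_def)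

lemma S_0_left: "S 0 b = (if b = 0 then 1 else 0)"
proof -
  have "S 0 b = Lam (scA iota) (\<lambda>(b1, b2). if b1 = 0 then R b2 0 else 0) (delta_mon b)"
    unfolding S_unfold Lam_D0[OF gA] case_prod_conv by (rule Lam_cong[OF gA]) (auto simp: R_0_left)
  also have "\<dots> = R b 0" by (rule Lam_Dc'[OF gA])
  finally show ?thesis by (simp add: R_0_right)
qed

lemma Lam_cmult: "Lam (scA iota) (\<lambda>k. c * g k) T = c * Lam (scA iota) g T"
  by (rule Lam_op[OF gA, symmetric]) (auto simp: algebra_simps)

lemma Lam_sum_cmult2: "Lam (scA iota) (\<lambda>(u, w). \<Sum>n\<in>J. c n * h n u w) T = (\<Sum>n\<in>J. c n * Lam (scA iota) (\<lambda>(u, w). h n u w) T)"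
  using Lam_gsum[OF gA, of "\<lambda>n k. c n * (case k of (u, w) \<Rightarrow> h n u w)" J T]
  by (simp add: split_def Lam_cmult)

lemma sum_extend_keys:
  assumes "ks u \<subseteq> ks b"
  shows "(\<Sum>n\<in>ks u. of_nat (lk u n) * (g n :: 'a)) = (\<Sum>n\<in>ks b. of_nat (lk u n) * g n)"
  by (rule sum.mono_neutral_left) (use assms in \<open>auto simp: in_keys_iff\<close>)

lemma R_step_left': "ks b1 \<subseteq> ks b \<Longrightarrow> R (a + Var i) b1 = (\<Sum>n\<in>ks b. of_nat (lk b1 n) * (q i n * R a (b1 - Var n)))"
  unfolding R_step_left by (rule sum_extend_keys)
lemma R_step_right': "ks b1 \<subseteq> ks b \<Longrightarrow> R b1 (a + Var i) = (\<Sum>n\<in>ks b. of_nat (lk b1 n) * (q n i * R (b1 - Var n) a))"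
  unfolding R_step_right by (rule sum_extend_keys)

lemma S_step: "S (a + Var i) b = (\<Sum>n\<in>ks b. of_nat (lk b n) * (sq i n * S a (b - Var n)))"
proof -
  let ?F = "\<lambda>a1 a2 b1 b2. R a1 b1 * R b2 a2"
  have A: "Lam (scA iota) (\<lambda>(b1, b2). R (a1 + Var i) b1 * R b2 a2) (delta_mon b) =
     (\<Sum>n\<in>ks b. q i n * (of_nat (lk b n) * Lam (scA iota) (\<lambda>(b1, b2). R a1 b1 * R b2 a2) (delta_mon (b - Var n))))"
    for a1 a2
  proof -
    have "Lam (scA iota) (\<lambda>(b1, b2). R (a1 + Var i) b1 * R b2 a2) (delta_mon b) =
      Lam (scA iota) (\<lambda>(b1, b2). \<Sum>n\<in>ks b. q i n * (of_nat (lk b1 n) * (R a1 (b1 - Var n) * R b2 a2))) (delta_mon b)"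
    proof (rule Lam_cong[OF gA], clarify)
      fix b1 b2 assume k: "(b1, b2) \<in> ks (delta_mon b)"
      show "R (a1 + Var i) b1 * R b2 a2 = (\<Sum>n\<in>ks b. q i n * (of_nat (lk b1 n) * (R a1 (b1 - Var n) * R b2 a2)))"
        unfolding R_step_left'[OF le_keys[OF k]] sum_distrib_right
        by (auto simp: algebra_simps intro!: sum.cong)
    qed
    also have "\<dots> = (\<Sum>n\<in>ks b. q i n * Lam (scA iota) (\<lambda>(b1, b2). of_nat (lk b1 n) * (R a1 (b1 - Var n) * R b2 a2)) (delta_mon b))"
      by (rule Lam_sum_cmult2)
    also have "\<dots> = (\<Sum>n\<in>ks b. q i n * (of_nat (lk b n) * Lam (scA iota) (\<lambda>(b1, b2). R a1 b1 * R b2 a2) (delta_mon (b - Var n))))"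
      using Lam_Dd[OF gA, of n "\<lambda>u w. R a1 u * R w a2" b for n] by simp
    finally show ?thesis .
  qed
  have B: "Lam (scA iota) (\<lambda>(b1, b2). R a1 b1 * R b2 (a2 + Var i)) (delta_mon b) =
     (\<Sum>n\<in>ks b. q n i * (of_nat (lk b n) * Lam (scA iota) (\<lambda>(b1, b2). R a1 b1 * R b2 a2) (delta_mon (b - Var n))))"
    for a1 a2
  proof -
    have "Lam (scA iota) (\<lambda>(b1, b2). R a1 b1 * R b2 (a2 + Var i)) (delta_mon b) =
      Lam (scA iota) (\<lambda>(b1, b2). \<Sum>n\<in>ks b. q n i * (of_nat (lk b2 n) * (R a1 b1 * R (b2 - Var n) a2))) (delta_mon b)"
    proof (rule Lam_cong[OF gA], clarify)
      fix b1 b2 assume k: "(b1, b2) \<in> ks (delta_mon b)"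
      show "R a1 b1 * R b2 (a2 + Var i) = (\<Sum>n\<in>ks b. q n i * (of_nat (lk b2 n) * (R a1 b1 * R (b2 - Var n) a2)))"
        unfolding R_step_right'[OF le_keys2[OF k]] sum_distrib_left
        by (auto simp: algebra_simps intro!: sum.cong)
    qed
    also have "\<dots> = (\<Sum>n\<in>ks b. q n i * Lam (scA iota) (\<lambda>(b1, b2). of_nat (lk b2 n) * (R a1 b1 * R (b2 - Var n) a2)) (delta_mon b))"
      by (rule Lam_sum_cmult2)
    also have "\<dots> = (\<Sum>n\<in>ks b. q n i * (of_nat (lk b n) * Lam (scA iota) (\<lambda>(b1, b2). R a1 b1 * R b2 a2) (delta_mon (b - Var n))))"
      using Lam_Dd'[OF gA, of n "\<lambda>u w. R a1 u * R w a2" b for n] by simp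
    finally show ?thesis .
  qed
  have "S (a + Var i) b =
    Lam (scA iota) (\<lambda>(a1, a2). \<Sum>n\<in>ks b. of_nat (lk b n) * (sq i n * Lam (scA iota) (\<lambda>(b1, b2). R a1 b1 * R b2 a2) (delta_mon (b - Var n)))) (delta_mon a)"
    unfolding S_unfold Lam_Dstep[OF gA] Lam_gadd[OF gA, symmetric]
    apply (rule Lam_cong[OF gA])
    apply (clarify, simp only: case_prod_conv A B sum.distrib[symmetric])
    apply (rule sum.cong, simp_all add: sq_def algebra_simps)
    done
  also have "\<dots> = (\<Sum>n\<in>ks b. of_nat (lk b n) * (sq i n * S a (b - Var n)))"
    by (simp add: Lam_sum_cmult2 mult.assoc[symmetric] S_unfold)
  finally show ?thesis .
qed

lemma S_Var: "S (Var i) b = (\<Sum>n\<in>ks b. of_nat (lk b n) * (sq i n * (if b = Var n then 1 else 0)))"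
proof -
  have e: "n \<in> ks b \<Longrightarrow> (b - Var n = 0) = (b = Var n)" for n
    by (metis minus_Var_add in_keys_iff add_0 cancel_comm_monoid_add_class.diff_cancel)
  show ?thesis using S_step[of 0 i b] by (simp add: S_0_left e cong: sum.cong)
qed

end

abbreviation X :: "nat \<Rightarrow> (mon \<Rightarrow>\<^sub>0 'a::comm_ring_1)" where "X i \<equiv> sg (Var i) 1"

lemma Var_add_eq: "Var i + a = b \<longleftrightarrow> (lk b i \<noteq> 0 \<and> a = b - Var i)"
proof
  assume h: "Var i + a = b"
  then have "lk b i \<noteq> 0" by (auto simp: lookup_add lookup_Var)
  moreover have "a = b - Var i" using h add_Var_minus[of a i] by (simp add: add.commute)
  ultimately show "lk b i \<noteq> 0 \<and> a = b - Var i" by simp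
next
  assume "lk b i \<noteq> 0 \<and> a = b - Var i"
  then show "Var i + a = b" using minus_Var_add'[of b i] by simp
qed

lemma sum_when_eq: "finite A \<Longrightarrow> (\<Sum>x\<in>A. (g x when x = c)) = (if c \<in> A then g c else 0)"
  by (simp add: when_def sum.delta')

lemma lookup_X_mult: "lk (X i * (F :: mon \<Rightarrow>\<^sub>0 'a::comm_ring_1)) b = (if lk b i = 0 then 0 else lk F (b - Var i))"
proof -
  have "X i * F = (\<Sum>a\<in>ks F. sg (Var i + a) (lk F a))"
    by (subst pm_expand[of F]) (simp add: sum_distrib_left mult_single)
  then have "lk (X i * F) b = (\<Sum>a\<in>ks F. (lk F a when Var i + a = b))"
    by (simp add: lookup_sum lookup_single)
  also have "\<dots> = (\<Sum>a\<in>ks F. ((if lk b i = 0 then 0 else lk F a) when a = b - Var i))"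
    by (rule sum.cong) (auto simp: Var_add_eq when_def)
  also have "\<dots> = (if lk b i = 0 then 0 else lk F (b - Var i))"
    by (simp add: sum_when_eq in_keys_iff)
  finally show ?thesis .
qed

lemma lookup_pderivA: "lk (pderivA i F) b = of_nat (lk b i + 1) * lk F (b + Var i)"
proof -
  have "lk (pderivA i F) b = (\<Sum>a\<in>ks F. (of_nat (lk a i) * lk F a when a - Var i = b))"
    by (simp add: pderivA_def lookup_sum lookup_single)
  also have "\<dots> = (\<Sum>a\<in>ks F. (of_nat (lk b i + 1) * lk F a when a = b + Var i))"
  proof (rule sum.cong)
    fix a assume "a \<in> ks F"
    show "(of_nat (lk a i) * lk F a when a - Var i = b) = (of_nat (lk b i + 1) * lk F a when a = b + Var i)"
    proof (cases "a = b + Var i")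
      case True then show ?thesis by (simp add: add_Var_minus lookup_add lookup_Var)
    next
      case False
      have "a - Var i = b \<Longrightarrow> lk a i = 0" using False minus_Var_add[of a i] by auto
      then show ?thesis using False by (auto simp: when_def)
    qed
  qed simp
  also have "\<dots> = of_nat (lk b i + 1) * lk F (b + Var i)"
    by (simp add: sum_when_eq in_keys_iff)
  finally show ?thesis .
qed

lemma pderivA_add: "pderivA i (F + G) = pderivA i F + pderivA i G"
  by (rule poly_mapping_eqI) (simp add: lookup_pderivA lookup_add algebra_simps)
lemma pderivA_zero[simp]: "pderivA i 0 = 0"
  by (rule poly_mapping_eqI) (simp add: lookup_pderivA)
lemma pderivA_smultA: "pderivA i (smultA c F) = smultA c (pderivA i F)"
  by (rule poly_mapping_eqI) (simp add: lookup_pderivA algebra_simps)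
lemma pderivA_sum: "pderivA i (\<Sum>j\<in>J. F j) = (\<Sum>j\<in>J. pderivA i (F j))"
  by (induction J rule: infinite_finite_induct) (auto simp: pderivA_add)
lemma pderivA_single: "pderivA i (sg a c) = sg (a - Var i) (of_nat (lk a i) * c)"
  by (simp add: pderivA_def)

lemma pderivA_comm: "pderivA m (pderivA n F) = pderivA n (pderivA m F)"
  by (rule poly_mapping_eqI) (simp add: lookup_pderivA lookup_add lookup_Var algebra_simps)

lemma pderivA_X: "pderivA n (X i * F) = X i * pderivA n F + (if n = i then F else 0)"
proof (rule poly_mapping_eqI)
  fix b
  show "lk (pderivA n (X i * F)) b = lk (X i * pderivA n F + (if n = i then F else 0)) b"
  proof (cases "n = i")
    case True
    then show ?thesis
      by (cases "lk b i = 0") (simp_all add: lookup_add lookup_X_mult lookup_pderivA lookup_Var lookup_minus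
          add_Var_minus minus_Var_add ring_distribs)
  next
    case False
    then show ?thesis
      by (auto simp: lookup_add lookup_X_mult lookup_pderivA lookup_Var Var_swap lookup_minus)
  qed
qed

definition vars :: "(mon \<Rightarrow>\<^sub>0 'a::zero) \<Rightarrow> nat set" where "vars F = (\<Union>a\<in>ks F. ks a)"

lemma finite_vars[simp]: "finite (vars F)" by (simp add: vars_def)

lemma pderivA_notvar:
  assumes "n \<notin> vars F" shows "pderivA n F = 0"
proof (rule poly_mapping_eqI)
  fix k
  have "n \<in> ks (k + Var n)" by (simp add: in_keys_iff lookup_add lookup_Var)
  then have "k + Var n \<notin> ks F" using assms by (auto simp: vars_def)
  then show "lk (pderivA n F) k = lk 0 k" by (simp add: lookup_pderivA in_keys_iff)
qed

lemma vars_pderivA: "vars (pderivA n F) \<subseteq> vars F"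
  unfolding vars_def
proof clarify
  fix b j assume "b \<in> ks (pderivA n F)" "j \<in> ks b"
  then have "b + Var n \<in> ks F" "j \<in> ks (b + Var n)"
    by (auto simp: in_keys_iff lookup_pderivA lookup_add)
  then show "j \<in> (\<Union>a\<in>ks F. ks a)" by blast
qed

lemma vars_add: "vars (F + G) \<subseteq> vars F \<union> vars G"
  unfolding vars_def using keys_add[of F G] by auto
lemma keys_smultA: "ks (smultA c F) \<subseteq> ks F"
  by (auto simp: in_keys_iff)
lemma vars_smultA: "vars (smultA c F) \<subseteq> vars F"
  unfolding vars_def using keys_smultA[of c F] by auto
lemma vars_sum: "vars (\<Sum>j\<in>J. F j) \<subseteq> (\<Union>j\<in>J. vars (F j))"
proof (induction J rule: infinite_finite_induct)
  case (insert x Fa)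
  then show ?case using vars_add[of "F x" "sum F Fa"] by auto
qed (auto simp: vars_def)
lemma vars_zero[simp]: "vars 0 = {}" by (simp add: vars_def)
lemma vars_X_mult: "vars (X i * F) \<subseteq> insert i (vars F)"
  unfolding vars_def
proof (rule subsetI)
  fix j assume "j \<in> (\<Union>a\<in>ks (X i * F). ks a)"
  then obtain b where b0: "b \<in> ks (X i * F)" "j \<in> ks b" by blast
  show "j \<in> insert i (\<Union>a\<in>ks F. ks a)"
  proof (cases "j = i")
    case False
    note b = b0 False
  from b have "lk b i \<noteq> 0" "b - Var i \<in> ks F"
    by (auto simp: in_keys_iff lookup_X_mult split: if_splits)
  moreover have "j \<in> ks (b - Var i)" using b by (auto simp: in_keys_iff lookup_minus lookup_Var)
  ultimately show ?thesis by blast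
  qed simp
qed

definition bnd :: "nat \<Rightarrow> (mon \<Rightarrow>\<^sub>0 'a::zero) \<Rightarrow> bool" where "bnd d F \<longleftrightarrow> (\<forall>a\<in>ks F. tdeg a < d)"

lemma bnd_zero[simp]: "bnd d 0" by (simp add: bnd_def)
lemma bnd_0: "bnd 0 F \<Longrightarrow> F = 0" by (auto simp: bnd_def)
lemma bnd_exists: "\<exists>d. bnd d F"
  by (rule exI[of _ "Suc (Max (tdeg ` ks F))"]) (auto simp: bnd_def le_imp_less_Suc)
lemma bnd_add: "bnd d F \<Longrightarrow> bnd d G \<Longrightarrow> bnd d (F + G)"
  unfolding bnd_def using keys_add[of F G] by auto
lemma bnd_smultA: "bnd d F \<Longrightarrow> bnd d (smultA c F)"
  unfolding bnd_def by (auto simp: in_keys_iff)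
lemma bnd_sum: "(\<And>j. j \<in> J \<Longrightarrow> bnd d (F j)) \<Longrightarrow> bnd d (\<Sum>j\<in>J. F j)"
  by (induction J rule: infinite_finite_induct) (auto simp: bnd_add)
lemma bnd_pderivA: "bnd (Suc d) F \<Longrightarrow> bnd d (pderivA n F)"
  unfolding bnd_def
proof
  fix b assume h: "\<forall>a\<in>ks F. tdeg a < Suc d" "b \<in> ks (pderivA n F)"
  then have "b + Var n \<in> ks F" by (auto simp: in_keys_iff lookup_pderivA)
  then show "tdeg b < d" using h(1) by (auto simp: tdeg_add)
qed
lemma bnd_mono: "bnd d F \<Longrightarrow> d \<le> e \<Longrightarrow> bnd e F"
  unfolding bnd_def by auto


context thm_ctx begin

lemma r_xv: "r (tensor (xv m) (xv n)) = q m n"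
  by (simp add: q_def R_def xv_def)

lemma Qp_fin:
  assumes "finite V" "vars F \<subseteq> V"
  shows "Qp r F = (\<Sum>m\<in>V. \<Sum>n\<in>V. smultA (q m n) (pderivA m (pderivA n F)))"
proof -
  have "Qp r F = (\<Sum>(m, n)\<in>V \<times> V. smultA (q m n) (pderivA m (pderivA n F)))"
    unfolding Qp_def r_xv
  proof (rule Sum_any.expand_superset)
    show "finite (V \<times> V)" using assms by simp
    show "{a. (case a of (m, n) \<Rightarrow> smultA (q m n) (pderivA m (pderivA n F))) \<noteq> 0} \<subseteq> V \<times> V"
    proof clarify
      fix m n assume h: "smultA (q m n) (pderivA m (pderivA n F)) \<noteq> 0"
      have "n \<in> V"
      proof (rule ccontr)
        assume "n \<notin> V" then have "n \<notin> vars F" using assms by auto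
        then have "pderivA n F = 0" by (rule pderivA_notvar)
        then show False using h by simp
      qed
      moreover have "m \<in> V"
      proof (rule ccontr)
        assume "m \<notin> V" then have "m \<notin> vars (pderivA n F)" using assms vars_pderivA[of n F] by auto
        then have "pderivA m (pderivA n F) = 0" by (rule pderivA_notvar)
        then show False using h by simp
      qed
      ultimately show "m \<in> V \<and> n \<in> V" by simp
    qed
  qed
  then show ?thesis by (simp add: sum.cartesian_product)
qed

lemma vars_Qp: "vars (Qp r F) \<subseteq> vars F"
proof -
  have "vars (Qp r F) \<subseteq> (\<Union>m\<in>vars F. \<Union>n\<in>vars F. vars (smultA (q m n) (pderivA m (pderivA n F))))"
    unfolding Qp_fin[OF finite_vars order_refl] using vars_sum by (fastforce dest: vars_sum[THEN subsetD])
  also have "\<dots> \<subseteq> vars F"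
    using vars_smultA vars_pderivA by (meson UN_least order_trans)
  finally show ?thesis .
qed

lemma Qp_add: "Qp r (F + G) = Qp r F + Qp r G"
proof -
  let ?V = "vars F \<union> vars G"
  have "Qp r (F + G) = (\<Sum>m\<in>?V. \<Sum>n\<in>?V. smultA (q m n) (pderivA m (pderivA n (F + G))))"
    by (rule Qp_fin) (use vars_add[of F G] in auto)
  also have "\<dots> = Qp r F + Qp r G"
    by (subst (1 2) Qp_fin[where V="?V"]) (auto simp: pderivA_add smultA_add sum.distrib)
  finally show ?thesis .
qed

lemma Qp_smultA: "Qp r (smultA c F) = smultA c (Qp r F)"
proof -
  have "Qp r (smultA c F) = (\<Sum>m\<in>vars F. \<Sum>n\<in>vars F. smultA (q m n) (pderivA m (pderivA n (smultA c F))))"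
    by (rule Qp_fin) (use vars_smultA in auto)
  also have "\<dots> = smultA c (Qp r F)"
    by (subst Qp_fin[where V="vars F"]) (auto simp: pderivA_smultA smultA_sum mult.commute)
  finally show ?thesis .
qed

lemma Qp_zero[simp]: "Qp r 0 = 0"
  using Qp_add[of 0 0] by simp

lemma Qp_sum: "Qp r (\<Sum>j\<in>J. F j) = (\<Sum>j\<in>J. Qp r (F j))"
  by (induction J rule: infinite_finite_induct) (auto simp: Qp_add)

lemma bnd_Qp: assumes "bnd (Suc d) F" shows "bnd d (Qp r F)"
proof -
  have "bnd d (pderivA m (pderivA n F))" for m n
    using bnd_pderivA[OF bnd_mono[OF bnd_pderivA[OF assms, of n], of "Suc d"], of m] by simp
  then show ?thesis unfolding Qp_fin[OF finite_vars order_refl]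
    by (intro bnd_sum bnd_smultA) auto
qed

lemma Qp_pow_zero[simp]: "(Qp r ^^ k) 0 = 0"
  by (induction k) auto

lemma Qp_nil: "bnd d F \<Longrightarrow> (Qp r ^^ d) F = 0"
proof (induction d arbitrary: F)
  case 0 then show ?case by (simp add: bnd_0)
next
  case (Suc d)
  have "(Qp r ^^ Suc d) F = (Qp r ^^ d) (Qp r F)" by (simp only: funpow_Suc_right o_def)
  also have "\<dots> = 0" using Suc bnd_Qp by blast
  finally show ?case .
qed

definition L :: "nat \<Rightarrow> (mon \<Rightarrow>\<^sub>0 'a) \<Rightarrow> (mon \<Rightarrow>\<^sub>0 'a)" where
  "L i F = (\<Sum>n\<in>vars F. smultA (sq i n) (pderivA n F))"

lemma L_fin:
  assumes "finite V" "vars F \<subseteq> V"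
  shows "L i F = (\<Sum>n\<in>V. smultA (sq i n) (pderivA n F))"
  unfolding L_def by (rule sum.mono_neutral_left) (use assms in \<open>auto simp: pderivA_notvar\<close>)

lemma vars_L: "vars (L i F) \<subseteq> vars F"
proof -
  have "vars (L i F) \<subseteq> (\<Union>n\<in>vars F. vars (smultA (sq i n) (pderivA n F)))"
    unfolding L_def by (rule vars_sum)
  also have "\<dots> \<subseteq> vars F" using vars_smultA vars_pderivA by (meson UN_least order_trans)
  finally show ?thesis .
qed

lemma L_add: "L i (F + G) = L i F + L i G"
proof -
  let ?V = "vars F \<union> vars G"
  have "L i (F + G) = (\<Sum>n\<in>?V. smultA (sq i n) (pderivA n (F + G)))"
    by (rule L_fin) (use vars_add[of F G] in auto)
  also have "\<dots> = L i F + L i G"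
    by (subst (1 2) L_fin[where V="?V"]) (auto simp: pderivA_add smultA_add sum.distrib)
  finally show ?thesis .
qed

lemma L_zero[simp]: "L i 0 = 0" using L_add[of i 0 0] by simp

lemma L_smultA: "L i (smultA c F) = smultA c (L i F)"
proof -
  have "L i (smultA c F) = (\<Sum>n\<in>vars F. smultA (sq i n) (pderivA n (smultA c F)))"
    by (rule L_fin) (use vars_smultA in auto)
  also have "\<dots> = smultA c (L i F)"
    by (subst L_fin[where V="vars F"]) (auto simp: pderivA_smultA smultA_sum mult.commute)
  finally show ?thesis .
qed

lemma L_sum: "L i (\<Sum>j\<in>J. F j) = (\<Sum>j\<in>J. L i (F j))"
  by (induction J rule: infinite_finite_induct) (auto simp: L_add)

lemma L_Qp: "L i (Qp r F) = Qp r (L i F)"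
proof -
  let ?V = "vars F"
  have "L i (Qp r F) = (\<Sum>n\<in>?V. smultA (sq i n) (pderivA n (Qp r F)))"
    by (rule L_fin) (use vars_Qp in auto)
  also have "\<dots> = (\<Sum>n\<in>?V. \<Sum>m\<in>?V. \<Sum>k\<in>?V. smultA (sq i n * q m k) (pderivA m (pderivA k (pderivA n F))))"
    by (subst Qp_fin[where V="?V"]) (auto simp: pderivA_sum pderivA_smultA smultA_sum pderivA_comm
        intro!: sum.cong arg_cong[where f="smultA _"])
  also have "\<dots> = (\<Sum>m\<in>?V. \<Sum>k\<in>?V. \<Sum>n\<in>?V. smultA (q m k * sq i n) (pderivA m (pderivA k (pderivA n F))))"
    by (subst sum.swap) (subst (2) sum.swap, simp add: mult.commute cong: sum.cong)
  also have "\<dots> = Qp r (L i F)"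
  proof -
    have "Qp r (L i F) = (\<Sum>m\<in>?V. \<Sum>k\<in>?V. smultA (q m k) (pderivA m (pderivA k (L i F))))"
      by (rule Qp_fin) (auto simp: vars_L)
    then show ?thesis by (simp add: L_def pderivA_sum pderivA_smultA smultA_sum mult.commute)
  qed
  finally show ?thesis .
qed

end

context thm_ctx begin

lemma Qp_pow_smultA: "(Qp r ^^ k) (smultA c F) = smultA c ((Qp r ^^ k) F)"
  by (induction k) (auto simp: Qp_smultA)
lemma Qp_pow_add: "(Qp r ^^ k) (F + G) = (Qp r ^^ k) F + (Qp r ^^ k) G"
  by (induction k) (auto simp: Qp_add)

lemma L_Qp_pow: "L i ((Qp r ^^ k) F) = (Qp r ^^ k) (L i F)"
  by (induction k) (auto simp: L_Qp)

lemma pderivA_if: "pderivA m (if b then F else 0) = (if b then pderivA m F else 0)" by simp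
lemma smultA_if: "smultA c (if b then F else 0) = (if b then smultA c F else 0)" by simp

lemma Qp_X: "Qp r (X i * F) = X i * Qp r F + L i F"
proof -
  let ?V = "insert i (vars F)"
  have fV: "finite ?V" by simp
  have "Qp r (X i * F) = (\<Sum>m\<in>?V. \<Sum>n\<in>?V. smultA (q m n) (pderivA m (pderivA n (X i * F))))"
    by (rule Qp_fin) (use vars_X_mult[of i F] in auto)
  also have "\<dots> = (\<Sum>m\<in>?V. \<Sum>n\<in>?V. X i * smultA (q m n) (pderivA m (pderivA n F)) +
        ((if m = i then smultA (q i n) (pderivA n F) else 0) + (if n = i then smultA (q m i) (pderivA m F) else 0)))"
    by (intro sum.cong refl) (simp add: pderivA_X pderivA_add smultA_add smultA_mult(2))
  also have "\<dots> = X i * Qp r F + ((\<Sum>n\<in>?V. smultA (q i n) (pderivA n F)) + (\<Sum>m\<in>?V. smultA (q m i) (pderivA m F)))"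
  proof -
    have a: "(\<Sum>m\<in>?V. \<Sum>n\<in>?V. X i * smultA (q m n) (pderivA m (pderivA n F))) = X i * Qp r F"
      by (subst Qp_fin[OF fV]) (auto simp: sum_distrib_left)
    have b: "(\<Sum>m\<in>?V. \<Sum>n\<in>?V. (if m = i then smultA (q i n) (pderivA n F) else 0)) = (\<Sum>n\<in>?V. smultA (q i n) (pderivA n F))"
    proof -
      have "(\<Sum>m\<in>?V. \<Sum>n\<in>?V. (if m = i then smultA (q i n) (pderivA n F) else 0)) =
          (\<Sum>m\<in>?V. if m = i then (\<Sum>n\<in>?V. smultA (q i n) (pderivA n F)) else 0)"
        by (rule sum.cong) auto
      then show ?thesis using fV by (simp add: sum.delta)
    qed
    have c: "(\<Sum>m\<in>?V. \<Sum>n\<in>?V. (if n = i then smultA (q m i) (pderivA m F) else 0)) = (\<Sum>m\<in>?V. smultA (q m i) (pderivA m F))"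
      using fV by (simp add: sum.delta)
    show ?thesis by (simp add: sum.distrib a b c)
  qed
  also have "\<dots> = X i * Qp r F + L i F"
    by (subst L_fin[OF fV]) (auto simp: sq_def smultA_add2 sum.distrib)
  finally show ?thesis .
qed

lemma Qp_pow_X: "(Qp r ^^ k) (X i * F) = X i * (Qp r ^^ k) F + smultA (of_nat k) (L i ((Qp r ^^ (k - 1)) F))"
proof (induction k)
  case 0 then show ?case by simp
next
  case (Suc k)
  have "(Qp r ^^ Suc k) (X i * F) = Qp r (X i * (Qp r ^^ k) F + smultA (of_nat k) (L i ((Qp r ^^ (k - 1)) F)))"
    using Suc by simp
  also have "\<dots> = X i * (Qp r ^^ Suc k) F + L i ((Qp r ^^ k) F) + smultA (of_nat k) (L i ((Qp r ^^ k) F))"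
  proof (cases k)
    case 0 then show ?thesis by (simp add: Qp_add Qp_X)
  next
    case (Suc j)
    then show ?thesis by (simp add: Qp_add Qp_X Qp_smultA flip: L_Qp)
  qed
  also have "\<dots> = X i * (Qp r ^^ Suc k) F + smultA (of_nat (Suc k)) (L i ((Qp r ^^ (Suc k - 1)) F))"
    by (simp add: smultA_add2 add.assoc add.commute)
  finally show ?case .
qed

abbreviation E where "E \<equiv> expQp iota r"

lemma E_fin:
  assumes "(Qp r ^^ N) F = 0"
  shows "E F = (\<Sum>k<N. smultA (iota (1 / of_nat (fact k))) ((Qp r ^^ k) F))"
  unfolding expQp_def
proof (rule Sum_any.expand_superset)
  show "finite {..<N}" by simp
  have "(Qp r ^^ k) F = 0" if "k \<ge> N" for k
  proof -
    have "Qp r ^^ k = (Qp r ^^ (k - N)) \<circ> (Qp r ^^ N)"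
      using that by (simp add: funpow_add[symmetric])
    then have "(Qp r ^^ k) F = (Qp r ^^ (k - N)) ((Qp r ^^ N) F)" by simp
    then show ?thesis using assms by simp
  qed
  then show "{a. smultA (iota (1 / of_nat (fact a))) ((Qp r ^^ a) F) \<noteq> 0} \<subseteq> {..<N}"
  proof (intro subsetI)
    fix k assume "k \<in> {a. smultA (iota (1 / of_nat (fact a))) ((Qp r ^^ a) F) \<noteq> 0}"
    then have "(Qp r ^^ k) F \<noteq> 0" by auto
    then show "k \<in> {..<N}" using \<open>\<And>k. k \<ge> N \<Longrightarrow> (Qp r ^^ k) F = 0\<close> by (meson lessThan_iff not_less)
  qed
qed

lemma E_exists_N: "\<exists>N. (Qp r ^^ N) F = 0"
  using bnd_exists[of F] Qp_nil by blast

lemma E_fin_mono: "(Qp r ^^ N) F = 0 \<Longrightarrow> N \<le> M \<Longrightarrow> (Qp r ^^ M) F = 0"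
  using funpow_add[of "M - N" N "Qp r"] by (simp add: fun_eq_iff)

lemma E_add: "E (F + G) = E F + E G"
proof -
  obtain N1 N2 where "(Qp r ^^ N1) F = 0" "(Qp r ^^ N2) G = 0" using E_exists_N by blast
  then have a: "(Qp r ^^ (N1 + N2)) F = 0" "(Qp r ^^ (N1 + N2)) G = 0"
    using E_fin_mono by auto
  then have b: "(Qp r ^^ (N1 + N2)) (F + G) = 0" by (simp add: Qp_pow_add)
  show ?thesis by (simp add: E_fin[OF a(1)] E_fin[OF a(2)] E_fin[OF b] Qp_pow_add smultA_add sum.distrib)
qed

lemma E_smultA: "E (smultA c F) = smultA c (E F)"
proof -
  obtain N where a: "(Qp r ^^ N) F = 0" using E_exists_N by blast
  then have b: "(Qp r ^^ N) (smultA c F) = 0" by (simp add: Qp_pow_smultA)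
  show ?thesis by (simp add: E_fin[OF a] E_fin[OF b] Qp_pow_smultA smultA_sum mult.commute)
qed

lemma E_one: "E 1 = 1"
proof -
  have "bnd 1 (1 :: mon \<Rightarrow>\<^sub>0 'a)" by (simp add: bnd_def)
  then have "(Qp r ^^ 1) 1 = 0" using Qp_nil by blast
  then have "E 1 = (\<Sum>k<1. smultA (iota (1 / of_nat (fact k))) ((Qp r ^^ k) 1))" by (rule E_fin)
  then show ?thesis by simp
qed

lemma fact_coef: "iota (1 / of_nat (fact (Suc j))) * of_nat (Suc j) = iota (1 / of_nat (fact j))"
proof -
  have "iota (1 / of_nat (fact (Suc j))) * of_nat (Suc j) = iota (1 / of_nat (fact (Suc j))) * iota (of_nat (Suc j))"
    by (simp only: io(5))
  also have "\<dots> = iota (1 / of_nat (fact (Suc j)) * of_nat (Suc j))"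
    by (simp only: io(2))
  also have "1 / of_nat (fact (Suc j)) * of_nat (Suc j) = (1 / of_nat (fact j) :: complex)"
  proof -
    have g: "(a::complex) \<noteq> 0 \<Longrightarrow> 1 / (a * b) * a = 1 / b" for a b
      by (cases "b = 0") (simp_all add: field_simps)
    show ?thesis unfolding fact_Suc of_nat_id of_nat_mult by (rule g) (metis of_nat_eq_0_iff nat.distinct(1))
  qed
  finally show ?thesis .
qed

lemma fact_coef': "iota (1 / fact (Suc j)) * of_nat (Suc j) = iota (1 / fact j)"
  using fact_coef[of j] by (simp del: of_nat_Suc fact_Suc)

lemma E_X: "E (X i * F) = X i * E F + L i (E F)"
proof -
  obtain N where a: "(Qp r ^^ N) F = 0" using E_exists_N by blast
  have a2: "(Qp r ^^ Suc N) F = 0" using a by simp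
  have b: "(Qp r ^^ Suc N) (X i * F) = 0" using Qp_pow_X[of "Suc N" i F] a a2 by simp
  have "E (X i * F) = (\<Sum>k<Suc N. smultA (iota (1 / of_nat (fact k))) (X i * (Qp r ^^ k) F)) +
       (\<Sum>k<Suc N. smultA (iota (1 / of_nat (fact k))) (smultA (of_nat k) (L i ((Qp r ^^ (k - 1)) F))))"
    by (simp add: E_fin[OF b] Qp_pow_X smultA_add sum.distrib)
  also have "(\<Sum>k<Suc N. smultA (iota (1 / of_nat (fact k))) (X i * (Qp r ^^ k) F)) = X i * E F"
    by (simp add: E_fin[OF a2] sum_distrib_left smultA_mult(2) distrib_left)
  also have "(\<Sum>k<Suc N. smultA (iota (1 / of_nat (fact k))) (smultA (of_nat k) (L i ((Qp r ^^ (k - 1)) F)))) =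
      (\<Sum>j<N. smultA (iota (1 / of_nat (fact j))) (L i ((Qp r ^^ j) F)))"
    by (subst sum.lessThan_Suc_shift) (simp add: fact_coef' del: of_nat_Suc fact_Suc)
  also have "\<dots> = L i (E F)"
    by (simp add: E_fin[OF a] L_sum L_smultA)
  finally show ?thesis .
qed

end

abbreviation Mo :: "mon \<Rightarrow> (mon \<Rightarrow>\<^sub>0 'a::comm_ring_1)" where "Mo c \<equiv> sg c 1"

definition lin :: "((mon \<Rightarrow>\<^sub>0 'a::comm_ring_1) \<Rightarrow> (mon \<Rightarrow>\<^sub>0 'a)) \<Rightarrow> bool" where
  "lin \<Phi> \<longleftrightarrow> (\<forall>F G. \<Phi> (F + G) = \<Phi> F + \<Phi> G) \<and> (\<forall>c F. \<Phi> (smultA c F) = smultA c (\<Phi> F))"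

definition bilin :: "((mon \<Rightarrow>\<^sub>0 'a::comm_ring_1) \<Rightarrow> (mon \<Rightarrow>\<^sub>0 'a) \<Rightarrow> (mon \<Rightarrow>\<^sub>0 'a)) \<Rightarrow> bool" where
  "bilin \<Phi> \<longleftrightarrow> (\<forall>G. lin (\<lambda>F. \<Phi> F G)) \<and> (\<forall>F. lin (\<lambda>G. \<Phi> F G))"

lemma lin_zero: "lin \<Phi> \<Longrightarrow> \<Phi> 0 = 0"
  unfolding lin_def by (metis add_cancel_right_right add_0)

lemma lin_sum: assumes "lin \<Phi>" shows "\<Phi> (\<Sum>j\<in>J. F j) = (\<Sum>j\<in>J. \<Phi> (F j))"
proof (induction J rule: infinite_finite_induct)
  case (infinite A) then show ?case using lin_zero[OF assms] by simp
next
  case empty then show ?case using lin_zero[OF assms] by simp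
next
  case (insert x A)
  have "\<Phi> (F x + sum F A) = \<Phi> (F x) + \<Phi> (sum F A)" using assms unfolding lin_def by blast
  then show ?case using insert by simp
qed

lemma single_smultA: "sg a c = smultA c (Mo a)"
  by simp

lemma pm_expand_M: "F = (\<Sum>a\<in>ks F. smultA (lk F a) (Mo a))"
  by (subst pm_expand) simp

lemma lin_eq:
  assumes "lin \<Phi>" "lin \<Psi>" "\<And>a. \<Phi> (Mo a) = \<Psi> (Mo a)"
  shows "\<Phi> F = \<Psi> F"
proof -
  have e: "F = (\<Sum>a\<in>ks F. smultA (lk F a) (Mo a))" by (rule pm_expand_M)
  have s1: "\<Phi> (smultA c G) = smultA c (\<Phi> G)" "\<Psi> (smultA c G) = smultA c (\<Psi> G)" for c G
    using assms(1,2) unfolding lin_def by blast+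
  have "\<Phi> F = \<Phi> (\<Sum>a\<in>ks F. smultA (lk F a) (Mo a))" using e by (rule arg_cong)
  also have "\<dots> = (\<Sum>a\<in>ks F. smultA (lk F a) (\<Phi> (Mo a)))" by (simp only: lin_sum[OF assms(1)] s1)
  also have "\<dots> = (\<Sum>a\<in>ks F. smultA (lk F a) (\<Psi> (Mo a)))" by (simp only: assms(3))
  also have "\<dots> = \<Psi> (\<Sum>a\<in>ks F. smultA (lk F a) (Mo a))" by (simp only: lin_sum[OF assms(2)] s1)
  also have "\<dots> = \<Psi> F" using e[symmetric] by (rule arg_cong)
  finally show ?thesis .
qed

lemma bilin_eq:
  assumes "bilin \<Phi>" "bilin \<Psi>" "\<And>a b. \<Phi> (Mo a) (Mo b) = \<Psi> (Mo a) (Mo b)"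
  shows "\<Phi> F G = \<Psi> F G"
proof -
  have l: "lin (\<lambda>G. \<Phi> F G)" "lin (\<lambda>G. \<Psi> F G)" "lin (\<lambda>F. \<Phi> F G)" "lin (\<lambda>F. \<Psi> F G)" for F G
    using assms(1,2) unfolding bilin_def by blast+
  have "\<Phi> (Mo a) G = \<Psi> (Mo a) G" for a
    by (rule lin_eq[OF l(1) l(2)]) (rule assms(3))
  then show ?thesis
    by (rule lin_eq[OF l(3) l(4)])
qed

lemma sg_sum: "sg k (\<Sum>j\<in>J. f j) = (\<Sum>j\<in>J. sg k (f j))"
  by (induction J rule: infinite_finite_induct) (auto simp: single_add)

lemma lin_X: "lin (\<lambda>F. X i * F)" unfolding lin_def by (simp add: distrib_left smultA_conv mult.left_commute)
lemma lin_id: "lin (\<lambda>F. F)" by (simp add: lin_def)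
lemma lin_add: "lin \<Phi> \<Longrightarrow> lin \<Psi> \<Longrightarrow> lin (\<lambda>F. \<Phi> F + \<Psi> F)"
  by (simp add: lin_def smultA_add algebra_simps)
lemma lin_comp: "lin \<Phi> \<Longrightarrow> lin \<Psi> \<Longrightarrow> lin (\<lambda>F. \<Phi> (\<Psi> F))"
  by (simp add: lin_def)

context thm_ctx begin

abbreviation Sy where "Sy \<equiv> symmetrization iota r"
abbreviation LK where "LK \<equiv> Lam (scK iota)"
abbreviation bm where "bm \<equiv> bullet_mon iota Sy"
abbreviation bu where "bu \<equiv> bullet iota Sy"

lemma scK_simp[simp]: "scK iota c F = smultA (iota c) F" by (simp add: scK_def)

lemma embA_mono: "embA iota (mono c) = Mo c"
  by (simp add: embA_def mono_def)

lemma embA_xv: "embA iota (xv i) = X i"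
  by (simp add: xv_def embA_mono)

lemma bm_unfold: "bm a b = LK (\<lambda>(a1, a2). LK (\<lambda>(b1, b2). smultA (S a2 b2) (Mo (a1 + b1))) (delta_mon b)) (delta_mon a)"
  unfolding bullet_mon_def Lam_def
  by (simp add: delta_mono split_def smultA_sum io(2) mono_mult embA_mono S_def mult.assoc)

lemma lin_L: "lin (L i)" by (simp add: lin_def L_add L_smultA)
lemma lin_E: "lin E" by (simp add: lin_def E_add E_smultA)

lemma bu_fin:
  assumes "finite A" "ks F \<subseteq> A" "finite B" "ks G \<subseteq> B"
  shows "bu F G = (\<Sum>a\<in>A. \<Sum>b\<in>B. smultA (lk F a * lk G b) (bm a b))"
proof -
  have "bu F G = (\<Sum>a\<in>A. \<Sum>b\<in>ks G. smultA (lk F a * lk G b) (bm a b))"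
    unfolding bullet_def by (rule sum.mono_neutral_left) (use assms in \<open>auto simp: in_keys_iff\<close>)
  also have "\<dots> = (\<Sum>a\<in>A. \<Sum>b\<in>B. smultA (lk F a * lk G b) (bm a b))"
    by (intro sum.cong refl sum.mono_neutral_left) (use assms in \<open>auto simp: in_keys_iff\<close>)
  finally show ?thesis .
qed

lemma bilin_bu: "bilin bu"
proof -
  have a1: "bu (F + G) H = bu F H + bu G H" for F G H
  proof -
    let ?A = "ks F \<union> ks G"
    show ?thesis
      by (subst (1 2 3) bu_fin[where A="?A" and B="ks H"]) (use keys_add[of F G] in
          \<open>auto simp: lookup_add algebra_simps smultA_add2 sum.distrib\<close>)
  qed
  have a2: "bu H (F + G) = bu H F + bu H G" for F G H
  proof -
    let ?A = "ks F \<union> ks G"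
    show ?thesis
      by (subst (1 2 3) bu_fin[where A="ks H" and B="?A"]) (use keys_add[of F G] in
          \<open>auto simp: lookup_add algebra_simps smultA_add2 sum.distrib\<close>)
  qed
  have s1: "bu (smultA c F) G = smultA c (bu F G)" for c F G
    by (subst (1 2) bu_fin[where A="ks F" and B="ks G"])
       (auto simp: keys_smultA smultA_sum mult.assoc)
  have s2: "bu G (smultA c F) = smultA c (bu G F)" for c F G
    by (subst (1 2) bu_fin[where A="ks G" and B="ks F"])
       (auto simp: keys_smultA smultA_sum algebra_simps)
  show ?thesis by (simp add: bilin_def lin_def a1 a2 s1 s2)
qed

lemma bu_M: "bu (Mo a) (Mo b) = bm a b"
  by (simp add: bullet_def)

lemma bm_0: "bm 0 b = Mo b"
proof -
  have "bm 0 b = LK (\<lambda>(b1, b2). if b2 = 0 then Mo b1 else 0) (delta_mon b)"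
    unfolding bm_unfold Lam_D0[OF gK] case_prod_conv
    by (rule Lam_cong[OF gK]) (auto simp: S_0_left)
  also have "\<dots> = Mo b" by (rule Lam_Dc[OF gK])
  finally show ?thesis .
qed

lemma bu_one: "bu 1 G = G"
  by (rule lin_eq[where \<Phi>="\<lambda>G. bu 1 G"]) (use bilin_bu in \<open>auto simp: bilin_def lin_id bu_M bm_0 simp flip: single_one\<close>)

lemma X_Mo: "X i * Mo a = Mo (a + Var i)"
  by (simp add: mult_single add.commute)

lemma pderivA_Mo: "pderivA n (Mo a) = smultA (of_nat (lk a n)) (Mo (a - Var n))"
  by (simp add: pderivA_single)

lemma vars_Mo: "vars (Mo a :: mon \<Rightarrow>\<^sub>0 'a) = ks a" by (simp add: vars_def)

lemma L_Mo: "L i (Mo a) = (\<Sum>n\<in>ks a. smultA (of_nat (lk a n) * sq i n) (Mo (a - Var n)))"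
  unfolding L_def vars_Mo by (simp add: pderivA_Mo mult.commute)

lemma L_Mo_superset: "finite V \<Longrightarrow> ks a \<subseteq> V \<Longrightarrow> L i (Mo a) = (\<Sum>n\<in>V. smultA (of_nat (lk a n) * sq i n) (Mo (a - Var n)))"
  unfolding L_Mo by (rule sum.mono_neutral_left) (auto simp: in_keys_iff)

lemma bm_Var: "bm (Var i) b = X i * Mo b + L i (Mo b)"
proof -
  have A: "LK (\<lambda>(b1, b2). smultA (S 0 b2) (Mo (Var i + b1))) (delta_mon b) = X i * Mo b"
  proof -
    have "LK (\<lambda>(b1, b2). smultA (S 0 b2) (Mo (Var i + b1))) (delta_mon b) =
          LK (\<lambda>(b1, b2). if b2 = 0 then Mo (b1 + Var i) else 0) (delta_mon b)"
      by (rule Lam_cong[OF gK]) (auto simp: S_0_left add.commute)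
    also have "\<dots> = Mo (b + Var i)" by (rule Lam_Dc[OF gK])
    finally show ?thesis by (simp add: X_Mo)
  qed
  have B: "LK (\<lambda>(b1, b2). smultA (S (Var i) b2) (Mo (0 + b1))) (delta_mon b) = L i (Mo b)"
  proof -
    have "LK (\<lambda>(b1, b2). smultA (S (Var i) b2) (Mo (0 + b1))) (delta_mon b) =
          LK (\<lambda>(b1, b2). \<Sum>n\<in>ks b. if b2 = Var n then smultA (sq i n) (Mo b1) else 0) (delta_mon b)"
    proof (rule Lam_cong[OF gK], clarify)
      fix b1 b2 assume k: "(b1, b2) \<in> ks (delta_mon b)"
      have "S (Var i) b2 = (\<Sum>n\<in>ks b. if b2 = Var n then sq i n else 0)"
        unfolding S_Var by (rule sum.mono_neutral_cong_left) (use le_keys2[OF k] in \<open>auto simp: lookup_Var\<close>)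
      then show "smultA (S (Var i) b2) (Mo (0 + b1)) = (\<Sum>n\<in>ks b. if b2 = Var n then smultA (sq i n) (Mo b1) else 0)"
        by (simp add: sg_sum) (rule sum.cong, auto)
    qed
    also have "\<dots> = (\<Sum>n\<in>ks b. LK (\<lambda>(b1, b2). if b2 = Var n then smultA (sq i n) (Mo b1) else 0) (delta_mon b))"
      using Lam_gsum[OF gK, of "\<lambda>n k. case k of (b1, b2) \<Rightarrow> if b2 = Var n then smultA (sq i n) (Mo b1) else 0" "ks b" "delta_mon b"]
      by (simp add: split_def)
    also have "\<dots> = L i (Mo b)"
      by (simp add: Lam_D1'[OF gK] L_Mo)
    finally show ?thesis .
  qed
  show ?thesis
    unfolding bm_unfold Lam_DVar[OF gK] case_prod_conv A B ..
qed

lemma bu_X: "bu (X i) G = X i * G + L i G"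
  by (rule lin_eq[where \<Phi>="\<lambda>G. bu (X i) G"])
     (use bilin_bu in \<open>auto simp: bilin_def lin_add lin_X lin_L bu_M bm_Var\<close>)

end

lemma mono_split1: "lk a1 n \<noteq> 0 \<Longrightarrow> a1 + b1 - Var n = a1 - Var n + b1"
  by (rule poly_mapping_eqI) (auto simp: lookup_add lookup_minus lookup_Var)
lemma mono_split2: "lk b1 n \<noteq> 0 \<Longrightarrow> a1 + b1 - Var n = a1 + (b1 - Var n)"
  by (rule poly_mapping_eqI) (auto simp: lookup_add lookup_minus lookup_Var)

lemma smultA_of_nat_mono_split:
  "smultA (of_nat (lk (a1 + b1) n) * c) (Mo (a1 + b1 - Var n) :: mon \<Rightarrow>\<^sub>0 'a::comm_ring_1) =
   smultA (of_nat (lk a1 n) * c) (Mo (a1 - Var n + b1)) + smultA (of_nat (lk b1 n) * c) (Mo (a1 + (b1 - Var n)))"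
proof -
  have "smultA (of_nat (lk (a1 + b1) n) * c) (Mo (a1 + b1 - Var n) :: mon \<Rightarrow>\<^sub>0 'a) =
    smultA (of_nat (lk a1 n) * c) (Mo (a1 + b1 - Var n)) + smultA (of_nat (lk b1 n) * c) (Mo (a1 + b1 - Var n))"
    by (simp add: lookup_add smultA_add2 algebra_simps single_add)
  also have "smultA (of_nat (lk a1 n) * c) (Mo (a1 + b1 - Var n) :: mon \<Rightarrow>\<^sub>0 'a) = smultA (of_nat (lk a1 n) * c) (Mo (a1 - Var n + b1))"
    by (cases "lk a1 n = 0") (simp_all add: mono_split1)
  also have "smultA (of_nat (lk b1 n) * c) (Mo (a1 + b1 - Var n) :: mon \<Rightarrow>\<^sub>0 'a) = smultA (of_nat (lk b1 n) * c) (Mo (a1 + (b1 - Var n)))"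
    by (cases "lk b1 n = 0") (simp_all add: mono_split2)
  finally show ?thesis .
qed

context thm_ctx begin

lemma LK_smultA: "LK (\<lambda>k. smultA c (g k)) T = smultA c (LK g T)"
  by (rule Lam_op[OF gK, symmetric]) (auto simp: smultA_add mult.commute)
lemma LK_X: "LK (\<lambda>k. X i * g k) T = X i * LK g T"
  by (rule Lam_op[OF gK, symmetric]) (auto simp: distrib_left smultA_conv mult.left_commute)
lemma LK_L: "LK (\<lambda>k. L i (g k)) T = L i (LK g T)"
  by (rule Lam_op[OF gK, symmetric]) (auto simp: L_add L_smultA)
lemma LK_sum: "LK (\<lambda>k. \<Sum>n\<in>J. g n k) T = (\<Sum>n\<in>J. LK (g n) T)"
  by (rule Lam_gsum[OF gK])

lemma LK_Dd: "LK (\<lambda>(u, w). smultA (of_nat (lk u n)) (f (u - Var n) w)) (delta_mon a) =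
   smultA (of_nat (lk a n)) (LK (\<lambda>(u, w). f u w) (delta_mon (a - Var n)))"
  using Lam_Dd[OF gK, of n f a] by simp
lemma LK_Dd': "LK (\<lambda>(u, w). smultA (of_nat (lk w n)) (f u (w - Var n))) (delta_mon a) =
   smultA (of_nat (lk a n)) (LK (\<lambda>(u, w). f u w) (delta_mon (a - Var n)))"
  using Lam_Dd'[OF gK, of n f a] by simp

lemma S_step': "ks b2 \<subseteq> ks b \<Longrightarrow> S (a + Var i) b2 = (\<Sum>n\<in>ks b. of_nat (lk b2 n) * (sq i n * S a (b2 - Var n)))"
  unfolding S_step by (rule sum_extend_keys)

definition II :: "mon \<Rightarrow> mon \<Rightarrow> mon \<Rightarrow> (mon \<Rightarrow>\<^sub>0 'a)" where
  "II a1 a2 = (\<lambda>c. LK (\<lambda>(b1, b2). smultA (S a2 b2) (Mo (a1 + b1))) (delta_mon c))"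

lemma bm_II: "bm a b = LK (\<lambda>(a1, a2). II a1 a2 b) (delta_mon a)"
  by (simp add: bm_unfold II_def)

lemma bm_step: "bm (a + Var i) b = X i * bm a b + (\<Sum>n\<in>ks b. smultA (of_nat (lk b n) * sq i n) (bm a (b - Var n)))"
proof -
  have A: "II (a1 + Var i) a2 b = X i * II a1 a2 b" for a1 a2
    unfolding II_def LK_X[symmetric]
    by (rule Lam_cong[OF gK]) (auto simp: mult_single add_ac)
  have B: "II a1 (a2 + Var i) b = (\<Sum>n\<in>ks b. smultA (of_nat (lk b n) * sq i n) (II a1 a2 (b - Var n)))" for a1 a2
  proof -
    have "II a1 (a2 + Var i) b = LK (\<lambda>(b1, b2). \<Sum>n\<in>ks b. smultA (of_nat (lk b2 n))
           (smultA (sq i n) (smultA (S a2 (b2 - Var n)) (Mo (a1 + b1))))) (delta_mon b)"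
      unfolding II_def
    proof (rule Lam_cong[OF gK], clarify)
      fix b1 b2 assume k: "(b1, b2) \<in> ks (delta_mon b)"
      show "smultA (S (a2 + Var i) b2) (Mo (a1 + b1)) = (\<Sum>n\<in>ks b. smultA (of_nat (lk b2 n))
           (smultA (sq i n) (smultA (S a2 (b2 - Var n)) (Mo (a1 + b1)))))"
        unfolding S_step'[OF le_keys2[OF k]] smultA_sum2 by (simp add: mult.assoc)
    qed
    also have "\<dots> = (\<Sum>n\<in>ks b. LK (\<lambda>(b1, b2). smultA (of_nat (lk b2 n))
           (smultA (sq i n) (smultA (S a2 (b2 - Var n)) (Mo (a1 + b1))))) (delta_mon b))"
      using LK_sum[of "\<lambda>n k. case k of (b1, b2) \<Rightarrow> smultA (of_nat (lk b2 n))
           (smultA (sq i n) (smultA (S a2 (b2 - Var n)) (Mo (a1 + b1))))" "ks b" "delta_mon b"]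
      by (simp add: split_def)
    also have "\<dots> = (\<Sum>n\<in>ks b. smultA (of_nat (lk b n)) (LK (\<lambda>(b1, b2). 
           smultA (sq i n) (smultA (S a2 b2) (Mo (a1 + b1)))) (delta_mon (b - Var n))))"
      by (rule sum.cong[OF refl]) (rule LK_Dd'[where f="\<lambda>u w. smultA (sq i n) (smultA (S a2 w) (Mo (a1 + u)))" for n])
    also have "\<dots> = (\<Sum>n\<in>ks b. smultA (of_nat (lk b n) * sq i n) (II a1 a2 (b - Var n)))"
      unfolding II_def by (rule sum.cong[OF refl]) (simp add: LK_smultA[symmetric] split_def mult.assoc)
    finally show ?thesis .
  qed
  have "bm (a + Var i) b = LK (\<lambda>(a1, a2). II (a1 + Var i) a2 b) (delta_mon a) + LK (\<lambda>(a1, a2). II a1 (a2 + Var i) b) (delta_mon a)"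
    unfolding bm_II Lam_Dstep[OF gK] by simp
  also have "LK (\<lambda>(a1, a2). II (a1 + Var i) a2 b) (delta_mon a) = X i * bm a b"
    unfolding bm_II A LK_X[symmetric] by (simp add: split_def)
  also have "LK (\<lambda>(a1, a2). II a1 (a2 + Var i) b) (delta_mon a) =
     (\<Sum>n\<in>ks b. smultA (of_nat (lk b n) * sq i n) (bm a (b - Var n)))"
    unfolding B bm_II
    using LK_sum[of "\<lambda>n k. case k of (a1, a2) \<Rightarrow> smultA (of_nat (lk b n) * sq i n) (II a1 a2 (b - Var n))" "ks b" "delta_mon a"]
    by (simp add: split_def LK_smultA)
  finally show ?thesis .
qed

end

declare smultA_single[simp del]

context thm_ctx begin

lemma sum_shrink:
  assumes "finite V" "ks a \<subseteq> V"
  shows "(\<Sum>n\<in>V. smultA (of_nat (lk a n) * c n) (G n)) = (\<Sum>n\<in>ks a. smultA (of_nat (lk a n) * c n) (G n))"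
  by (rule sum.mono_neutral_right) (use assms in \<open>auto simp: in_keys_iff\<close>)

lemma LK_smultA': "LK (\<lambda>k. smultA (c * d k) (G k)) T = smultA c (LK (\<lambda>k. smultA (d k) (G k)) T)"
  using LK_smultA[of c "\<lambda>k. smultA (d k) (G k)" T] by simp

lemma L_bm: "L i (bm a b) = (\<Sum>n\<in>ks a. smultA (of_nat (lk a n) * sq i n) (bm (a - Var n) b)) +
                           (\<Sum>n\<in>ks b. smultA (of_nat (lk b n) * sq i n) (bm a (b - Var n)))"
proof -
  let ?V = "ks a \<union> ks b"
  have fV: "finite ?V" by simp
  have inner: "L i (II a1 a2 b) = (\<Sum>n\<in>?V. smultA (sq i n) (smultA (of_nat (lk a1 n)) (II (a1 - Var n) a2 b))) +
     (\<Sum>n\<in>?V. smultA (sq i n) (smultA (of_nat (lk b n)) (II a1 a2 (b - Var n))))"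
    if ka: "ks a1 \<subseteq> ks a" for a1 a2
  proof -
    have "L i (II a1 a2 b) = LK (\<lambda>(b1, b2). smultA (S a2 b2) (L i (Mo (a1 + b1)))) (delta_mon b)"
      unfolding II_def LK_L[symmetric] by (simp add: split_def L_smultA del: smultA_single)
    also have "\<dots> = LK (\<lambda>(b1, b2). \<Sum>n\<in>?V. smultA (sq i n) (smultA (of_nat (lk a1 n)) (smultA (S a2 b2) (Mo (a1 - Var n + b1)))) +
          smultA (sq i n) (smultA (of_nat (lk b1 n)) (smultA (S a2 b2) (Mo (a1 + (b1 - Var n)))))) (delta_mon b)"
    proof (rule Lam_cong[OF gK], clarify)
      fix b1 b2 assume k: "(b1, b2) \<in> ks (delta_mon b)"
      have sub: "ks (a1 + b1) \<subseteq> ?V" using ka le_keys[OF k] keys_add[of a1 b1] by auto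
      show "smultA (S a2 b2) (L i (Mo (a1 + b1))) = (\<Sum>n\<in>?V. smultA (sq i n) (smultA (of_nat (lk a1 n)) (smultA (S a2 b2) (Mo (a1 - Var n + b1)))) +
          smultA (sq i n) (smultA (of_nat (lk b1 n)) (smultA (S a2 b2) (Mo (a1 + (b1 - Var n))))))"
        unfolding L_Mo_superset[OF fV sub] smultA_of_nat_mono_split smultA_sum
        by (rule sum.cong[OF refl]) (simp add: smultA_add algebra_simps)
    qed
    also have "\<dots> = (\<Sum>n\<in>?V. smultA (sq i n) (LK (\<lambda>(b1, b2). smultA (of_nat (lk a1 n)) (smultA (S a2 b2) (Mo (a1 - Var n + b1)))) (delta_mon b))) +
          (\<Sum>n\<in>?V. smultA (sq i n) (LK (\<lambda>(b1, b2). smultA (of_nat (lk b1 n)) (smultA (S a2 b2) (Mo (a1 + (b1 - Var n))))) (delta_mon b)))"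
      by (simp add: split_def LK_sum Lam_gadd[OF gK] sum.distrib LK_smultA LK_smultA')
    also have "\<dots> = (\<Sum>n\<in>?V. smultA (sq i n) (smultA (of_nat (lk a1 n)) (II (a1 - Var n) a2 b))) +
     (\<Sum>n\<in>?V. smultA (sq i n) (smultA (of_nat (lk b n)) (II a1 a2 (b - Var n))))"
    proof -
      have e1: "LK (\<lambda>(b1, b2). smultA (of_nat (lk a1 n)) (smultA (S a2 b2) (Mo (a1 - Var n + b1)))) (delta_mon b) =
          smultA (of_nat (lk a1 n)) (II (a1 - Var n) a2 b)" for n
        unfolding II_def by (simp add: split_def LK_smultA')
      have e2: "LK (\<lambda>(b1, b2). smultA (of_nat (lk b1 n)) (smultA (S a2 b2) (Mo (a1 + (b1 - Var n))))) (delta_mon b) =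
          smultA (of_nat (lk b n)) (II a1 a2 (b - Var n))" for n
        unfolding II_def using LK_Dd[of n "\<lambda>u w. smultA (S a2 w) (Mo (a1 + u))" b] by simp
      show ?thesis by (simp only: e1 e2)
    qed
    finally show ?thesis .
  qed
  have "L i (bm a b) = LK (\<lambda>(a1, a2). L i (II a1 a2 b)) (delta_mon a)"
    unfolding bm_II LK_L[symmetric] by (simp add: split_def)
  also have "\<dots> = LK (\<lambda>(a1, a2). (\<Sum>n\<in>?V. smultA (sq i n) (smultA (of_nat (lk a1 n)) (II (a1 - Var n) a2 b))) +
     (\<Sum>n\<in>?V. smultA (sq i n) (smultA (of_nat (lk b n)) (II a1 a2 (b - Var n))))) (delta_mon a)"
    by (rule Lam_cong[OF gK]) (auto simp: inner le_keys)
  also have "\<dots> = (\<Sum>n\<in>?V. smultA (sq i n) (LK (\<lambda>(a1, a2). smultA (of_nat (lk a1 n)) (II (a1 - Var n) a2 b)) (delta_mon a))) +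
     (\<Sum>n\<in>?V. smultA (sq i n) (smultA (of_nat (lk b n)) (LK (\<lambda>(a1, a2). II a1 a2 (b - Var n)) (delta_mon a))))"
    by (simp add: split_def LK_sum Lam_gadd[OF gK] LK_smultA LK_smultA')
  also have "\<dots> = (\<Sum>n\<in>?V. smultA (of_nat (lk a n) * sq i n) (bm (a - Var n) b)) +
     (\<Sum>n\<in>?V. smultA (of_nat (lk b n) * sq i n) (bm a (b - Var n)))"
  proof -
    have e: "LK (\<lambda>(a1, a2). smultA (of_nat (lk a1 n)) (II (a1 - Var n) a2 b)) (delta_mon a) =
          smultA (of_nat (lk a n)) (bm (a - Var n) b)" for n
      unfolding bm_II using LK_Dd[of n "\<lambda>u w. II u w b" a] by simp
    show ?thesis by (simp add: e bm_II mult.commute)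
  qed
  also have "\<dots> = (\<Sum>n\<in>ks a. smultA (of_nat (lk a n) * sq i n) (bm (a - Var n) b)) +
                  (\<Sum>n\<in>ks b. smultA (of_nat (lk b n) * sq i n) (bm a (b - Var n)))"
    by (simp add: sum_shrink[OF fV])
  finally show ?thesis .
qed

end

context thm_ctx begin

lemma bu_lin1: "lin (\<lambda>F. bu F G)" using bilin_bu by (simp add: bilin_def)
lemma bu_lin2: "lin (\<lambda>G. bu F G)" using bilin_bu by (simp add: bilin_def)

lemma bu_Mo_L: "bu (Mo a) (L i (Mo b)) = (\<Sum>n\<in>ks b. smultA (of_nat (lk b n) * sq i n) (bm a (b - Var n)))"
  unfolding L_Mo lin_sum[OF bu_lin2]
  using bu_lin2[of "Mo a"] by (simp add: lin_def bu_M)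

lemma bu_L_Mo: "bu (L i (Mo a)) (Mo b) = (\<Sum>n\<in>ks a. smultA (of_nat (lk a n) * sq i n) (bm (a - Var n) b))"
  unfolding L_Mo lin_sum[OF bu_lin1]
  using bu_lin1[of "Mo b"] by (simp add: lin_def bu_M)

lemma bu_X_left: "bu (X i * H) K = X i * bu H K + bu H (L i K)"
proof (rule bilin_eq[where \<Phi>="\<lambda>H K. bu (X i * H) K" and \<Psi>="\<lambda>H K. X i * bu H K + bu H (L i K)"])
  show "bilin (\<lambda>H K. bu (X i * H) K)"
    unfolding bilin_def using lin_comp[OF bu_lin1 lin_X] bu_lin2 by blast
  show "bilin (\<lambda>H K. X i * bu H K + bu H (L i K))"
    unfolding bilin_def
    using lin_add[OF lin_comp[OF lin_X bu_lin1] bu_lin1] lin_add[OF lin_comp[OF lin_X bu_lin2] lin_comp[OF bu_lin2 lin_L]]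
    by blast
  show "bu (X i * Mo a) (Mo b) = X i * bu (Mo a) (Mo b) + bu (Mo a) (L i (Mo b))" for a b
    by (simp add: X_Mo bu_M bm_step bu_Mo_L)
qed

lemma L_bu: "L i (bu H K) = bu (L i H) K + bu H (L i K)"
proof (rule bilin_eq[where \<Phi>="\<lambda>H K. L i (bu H K)" and \<Psi>="\<lambda>H K. bu (L i H) K + bu H (L i K)"])
  show "bilin (\<lambda>H K. L i (bu H K))"
    unfolding bilin_def using lin_comp[OF lin_L bu_lin1] lin_comp[OF lin_L bu_lin2] by blast
  show "bilin (\<lambda>H K. bu (L i H) K + bu H (L i K))"
    unfolding bilin_def
    using lin_add[OF lin_comp[OF bu_lin1 lin_L] bu_lin1] lin_add[OF bu_lin2 lin_comp[OF bu_lin2 lin_L]]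
    by blast
  show "L i (bu (Mo a) (Mo b)) = bu (L i (Mo a)) (Mo b) + bu (Mo a) (L i (Mo b))" for a b
    by (simp add: bu_M L_bm bu_Mo_L bu_L_Mo)
qed

lemma bu_assoc_X: "bu (X i) (bu H K) = bu (bu (X i) H) K"
proof -
  have "bu (X i) (bu H K) = X i * bu H K + bu (L i H) K + bu H (L i K)"
    by (simp add: bu_X L_bu add.assoc)
  also have "\<dots> = bu (X i * H + L i H) K"
    using bu_lin1[of K] by (simp add: lin_def bu_X_left add_ac)
  finally show ?thesis by (simp add: bu_X)
qed

lemma E_Mo_add: "E (Mo (a + b)) = bu (E (Mo a)) (E (Mo b))"
proof (induction a rule: mon_induct)
  case zero
  then show ?case by (simp add: E_one bu_one)
next
  case (step a i)
  have "E (Mo (a + Var i + b)) = E (X i * Mo (a + b))"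
    by (simp add: X_Mo add_ac)
  also have "\<dots> = bu (X i) (E (Mo (a + b)))" by (simp add: E_X bu_X)
  also have "\<dots> = bu (X i) (bu (E (Mo a)) (E (Mo b)))" using step by simp
  also have "\<dots> = bu (bu (X i) (E (Mo a))) (E (Mo b))" by (rule bu_assoc_X)
  also have "bu (X i) (E (Mo a)) = E (Mo (a + Var i))" by (simp add: E_X bu_X flip: X_Mo)
  finally show ?case .
qed

lemma E_mult: "E (F * G) = bu (E F) (E G)"
proof (rule bilin_eq[where \<Phi>="\<lambda>F G. E (F * G)" and \<Psi>="\<lambda>F G. bu (E F) (E G)"])
  show "bilin (\<lambda>F G. E (F * G))"
    unfolding bilin_def lin_def by (simp add: distrib_left distrib_right E_add smultA_mult[symmetric] E_smultA)
  show "bilin (\<lambda>F G. bu (E F) (E G))"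
    unfolding bilin_def using lin_comp[OF bu_lin1 lin_E] lin_comp[OF bu_lin2 lin_E] by blast
  show "E (Mo a * Mo b) = bu (E (Mo a)) (E (Mo b))" for a b
    by (simp add: mult_single E_Mo_add)
qed

end

definition wsum :: "nat list \<Rightarrow> mon" where "wsum ws = sum_list (map Var ws)"

lemma lookup_sum_list: "lk (sum_list (xs :: mon list)) j = sum_list (map (\<lambda>x. lk x j) xs)"
  by (induction xs) (auto simp: lookup_add)

lemma sum_list_concat': "sum_list (concat xss) = sum_list (map sum_list (xss :: 'b::monoid_add list list))"
  by (induction xss) auto

lemma sum_delta_mult: "finite A \<Longrightarrow> (\<Sum>x\<in>A. g x * (if x = b then 1 else 0)) = (if b \<in> A then g b else (0::'b::semiring_1))"
proof -
  assume "finite A"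
  have "(\<Sum>x\<in>A. g x * (if x = b then 1 else 0)) = (\<Sum>x\<in>A. if x = b then g x else 0)"
    by (rule sum.cong) auto
  then show ?thesis using \<open>finite A\<close> by (simp add: sum.delta')
qed

lemma wsum_mon_word: "wsum (mon_word a) = a"
proof (rule poly_mapping_eqI)
  fix j
  have d: "distinct (sorted_list_of_set (ks a))" by simp
  have "lk (wsum (mon_word a)) j = sum_list (map (\<lambda>i. if j = i then lk a i else 0) (sorted_list_of_set (ks a)))"
    unfolding wsum_def mon_word_def lookup_sum_list
    apply (simp add: map_concat sum_list_concat' comp_def lookup_Var sum_list_replicate)
    apply (rule arg_cong[where f=sum_list], rule map_cong, auto)
    done
  also have "\<dots> = (\<Sum>i\<in>ks a. if j = i then lk a i else 0)"
    using sum_list_distinct_conv_sum_set[OF d, of "\<lambda>i. if j = i then lk a i else 0"] by simp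
  also have "\<dots> = lk a j" by (simp add: in_keys_iff)
  finally show "lk (wsum (mon_word a)) j = lk a j" .
qed

context thm_ctx begin

lemma bullet_word_E: "bullet_word iota Sy ws = E (Mo (wsum ws))"
proof (induction ws)
  case Nil then show ?case by (simp add: bullet_word_def wsum_def E_one)
next
  case (Cons i ws)
  have "bullet_word iota Sy (i # ws) = bu (X i) (bullet_word iota Sy ws)"
    by (simp add: bullet_word_def embA_xv)
  also have "\<dots> = E (X i * Mo (wsum ws))" by (simp add: Cons bu_X E_X)
  also have "\<dots> = E (Mo (wsum (i # ws)))" by (simp add: X_Mo wsum_def add.commute)
  finally show ?case .
qed

lemma embA_expand: "embA iota P = (\<Sum>a\<in>ks P. smultA (iota (lk P a)) (Mo a))"
proof (rule poly_mapping_eqI)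
  fix b
  show "lk (embA iota P) b = lk (\<Sum>a\<in>ks P. smultA (iota (lk P a)) (Mo a)) b"
    by (simp add: embA_def lookup_map' when_def lookup_sum lookup_single sum_delta_mult in_keys_iff)
qed

lemma E_embA: "E (embA iota P) = (\<Sum>a\<in>ks P. smultA (iota (lk P a)) (E (Mo a)))"
  unfolding embA_expand lin_sum[OF lin_E] by (simp add: E_smultA)

lemma conj2: "E (embA iota P) = bullet_poly iota Sy P"
  by (simp add: E_embA bullet_poly_def bullet_word_E wsum_mon_word)

end

context thm_ctx begin

definition rho :: "mon \<Rightarrow> 'a" where "rho u = Lam (scA iota) (\<lambda>(u1, u2). R u1 u2) (delta_mon u)"

lemma rho_0: "rho 0 = 1"
  by (simp add: rho_def Lam_D0[OF gA] R_0_left)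

lemma Lam_Dd_A: "Lam (scA iota) (\<lambda>(u, w). of_nat (lk u n) * f (u - Var n) w) (delta_mon a) =
   of_nat (lk a n) * Lam (scA iota) (\<lambda>(u, w). f u w) (delta_mon (a - Var n))"
  using Lam_Dd[OF gA, of n f a] by simp
lemma Lam_Dd'_A: "Lam (scA iota) (\<lambda>(u, w). of_nat (lk w n) * f u (w - Var n)) (delta_mon a) =
   of_nat (lk a n) * Lam (scA iota) (\<lambda>(u, w). f u w) (delta_mon (a - Var n))"
  using Lam_Dd'[OF gA, of n f a] by simp

lemma rho_step: "rho (u + Var i) = (\<Sum>n\<in>ks u. of_nat (lk u n) * (sq i n * rho (u - Var n)))"
proof -
  have A: "Lam (scA iota) (\<lambda>(a, b). R (a + Var i) b) (delta_mon u) = (\<Sum>n\<in>ks u. q i n * (of_nat (lk u n) * rho (u - Var n)))"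
  proof -
    have "Lam (scA iota) (\<lambda>(a, b). R (a + Var i) b) (delta_mon u) =
        Lam (scA iota) (\<lambda>(a, b). \<Sum>n\<in>ks u. q i n * (of_nat (lk b n) * R a (b - Var n))) (delta_mon u)"
    proof (rule Lam_cong[OF gA], clarify)
      fix a b assume k: "(a, b) \<in> ks (delta_mon u)"
      show "R (a + Var i) b = (\<Sum>n\<in>ks u. q i n * (of_nat (lk b n) * R a (b - Var n)))"
        unfolding R_step_left'[OF le_keys2[OF k]] by (rule sum.cong) (auto simp: algebra_simps)
    qed
    also have "\<dots> = (\<Sum>n\<in>ks u. q i n * Lam (scA iota) (\<lambda>(a, b). of_nat (lk b n) * R a (b - Var n)) (delta_mon u))"
      by (rule Lam_sum_cmult2)
    also have "\<dots> = (\<Sum>n\<in>ks u. q i n * (of_nat (lk u n) * rho (u - Var n)))"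
      by (simp add: Lam_Dd'_A rho_def)
    finally show ?thesis .
  qed
  have B: "Lam (scA iota) (\<lambda>(a, b). R a (b + Var i)) (delta_mon u) = (\<Sum>n\<in>ks u. q n i * (of_nat (lk u n) * rho (u - Var n)))"
  proof -
    have "Lam (scA iota) (\<lambda>(a, b). R a (b + Var i)) (delta_mon u) =
        Lam (scA iota) (\<lambda>(a, b). \<Sum>n\<in>ks u. q n i * (of_nat (lk a n) * R (a - Var n) b)) (delta_mon u)"
    proof (rule Lam_cong[OF gA], clarify)
      fix a b assume k: "(a, b) \<in> ks (delta_mon u)"
      show "R a (b + Var i) = (\<Sum>n\<in>ks u. q n i * (of_nat (lk a n) * R (a - Var n) b))"
        unfolding R_step_right'[OF le_keys[OF k]] by (rule sum.cong) (auto simp: algebra_simps)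
    qed
    also have "\<dots> = (\<Sum>n\<in>ks u. q n i * Lam (scA iota) (\<lambda>(a, b). of_nat (lk a n) * R (a - Var n) b) (delta_mon u))"
      by (rule Lam_sum_cmult2)
    also have "\<dots> = (\<Sum>n\<in>ks u. q n i * (of_nat (lk u n) * rho (u - Var n)))"
      by (simp add: Lam_Dd_A rho_def)
    finally show ?thesis .
  qed
  show ?thesis
    unfolding rho_def[of "u + Var i"] Lam_Dstep[OF gA]
    by (simp add: A B flip: rho_def) (simp add: sum.distrib[symmetric] sq_def algebra_simps)
qed

definition EQm :: "mon \<Rightarrow> (mon \<Rightarrow>\<^sub>0 'a)" where
  "EQm a = LK (\<lambda>(u, w). smultA (rho u) (Mo w)) (delta_mon a)"

lemma EQm_0: "EQm 0 = 1"
  by (simp add: EQm_def Lam_D0[OF gK] rho_0)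

lemma pderivA_EQm: "pderivA n (EQm a) = smultA (of_nat (lk a n)) (EQm (a - Var n))"
proof -
  have "pderivA n (EQm a) = LK (\<lambda>(u, w). pderivA n (smultA (rho u) (Mo w))) (delta_mon a)"
    unfolding EQm_def
    by (subst Lam_op[OF gK, where \<phi>="pderivA n"]) (auto simp: pderivA_add pderivA_smultA split_def)
  also have "\<dots> = LK (\<lambda>(u, w). smultA (of_nat (lk w n)) (smultA (rho u) (Mo (w - Var n)))) (delta_mon a)"
    by (rule Lam_cong[OF gK]) (auto simp: pderivA_smultA pderivA_Mo mult.commute)
  also have "\<dots> = smultA (of_nat (lk a n)) (EQm (a - Var n))"
    unfolding EQm_def by (rule LK_Dd')
  finally show ?thesis .
qed

lemma EQm_step: "EQm (a + Var i) = X i * EQm a + L i (EQm a)"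
proof -
  have first: "LK (\<lambda>(u, w). smultA (rho (u + Var i)) (Mo w)) (delta_mon a) =
     (\<Sum>n\<in>ks a. smultA (sq i n) (smultA (of_nat (lk a n)) (EQm (a - Var n))))"
  proof -
    have "LK (\<lambda>(u, w). smultA (rho (u + Var i)) (Mo w)) (delta_mon a) =
        LK (\<lambda>(u, w). \<Sum>n\<in>ks a. smultA (sq i n) (smultA (of_nat (lk u n)) (smultA (rho (u - Var n)) (Mo w)))) (delta_mon a)"
    proof (rule Lam_cong[OF gK], clarify)
      fix u w assume k: "(u, w) \<in> ks (delta_mon a)"
      have "rho (u + Var i) = (\<Sum>n\<in>ks a. of_nat (lk u n) * (sq i n * rho (u - Var n)))"
        unfolding rho_step by (rule sum_extend_keys[OF le_keys[OF k]])
      then show "smultA (rho (u + Var i)) (Mo w) = (\<Sum>n\<in>ks a. smultA (sq i n) (smultA (of_nat (lk u n)) (smultA (rho (u - Var n)) (Mo w))))"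
        by (simp add: smultA_sum2 algebra_simps)
    qed
    also have "\<dots> = (\<Sum>n\<in>ks a. smultA (sq i n) (LK (\<lambda>(u, w). smultA (of_nat (lk u n)) (smultA (rho (u - Var n)) (Mo w))) (delta_mon a)))"
      using LK_sum[of "\<lambda>n k. case k of (u, w) \<Rightarrow> smultA (sq i n) (smultA (of_nat (lk u n)) (smultA (rho (u - Var n)) (Mo w)))" "ks a" "delta_mon a"]
      by (simp add: split_def LK_smultA LK_smultA')
    also have "\<dots> = (\<Sum>n\<in>ks a. smultA (sq i n) (smultA (of_nat (lk a n)) (EQm (a - Var n))))"
      unfolding EQm_def by (simp only: LK_Dd[of _ "\<lambda>u w. smultA (rho u) (Mo w)"])
    finally show ?thesis .
  qed
  have second: "LK (\<lambda>(u, w). smultA (rho u) (Mo (w + Var i))) (delta_mon a) = X i * EQm a"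
    unfolding EQm_def LK_X[symmetric]
    by (rule Lam_cong[OF gK]) (auto simp: smultA_mult(2)[symmetric] X_Mo)
  have Lf: "L i (EQm a) = (\<Sum>n\<in>ks a. smultA (sq i n) (smultA (of_nat (lk a n)) (EQm (a - Var n))))"
  proof -
    let ?V = "ks a \<union> vars (EQm a)"
    have "L i (EQm a) = (\<Sum>n\<in>?V. smultA (sq i n) (pderivA n (EQm a)))"
      by (rule L_fin) auto
    also have "\<dots> = (\<Sum>n\<in>?V. smultA (sq i n) (smultA (of_nat (lk a n)) (EQm (a - Var n))))"
      by (simp add: pderivA_EQm)
    also have "\<dots> = (\<Sum>n\<in>ks a. smultA (sq i n) (smultA (of_nat (lk a n)) (EQm (a - Var n))))"
      by (rule sum.mono_neutral_right) (auto simp: in_keys_iff)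
    finally show ?thesis .
  qed
  show ?thesis
    unfolding EQm_def[of "a + Var i"] Lam_Dstep[OF gK]
    by (simp add: first second Lf add.commute)
qed

lemma EQm_E: "EQm a = E (Mo a)"
proof (induction a rule: mon_induct)
  case zero then show ?case by (simp add: EQm_0 E_one)
next
  case (step a i)
  then show ?case by (simp add: EQm_step E_X flip: X_Mo)
qed

lemma EQ_decomp: "EQ iota r P = (\<Sum>a\<in>ks P. smultA (iota (lk P a)) (EQm a))"
proof -
  have e1: "EQ iota r P = LK (\<lambda>(u, v, w). smultA (R u v) (Mo w)) (delta2 P)"
    unfolding EQ_def Lam_def by (simp add: split_def embA_mono R_def tensor_mono io(2))
  have e2: "LK (\<lambda>(u, v, w). smultA (R u v) (Mo w)) (delta2 P) = LK (\<lambda>(u, w). smultA (rho u) (Mo w)) (delta P)"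
  proof -
    have "LK (\<lambda>(u, v, w). smultA (R u v) (Mo w)) (delta2 P) =
        (\<Sum>(u, w)\<in>ks (delta P). \<Sum>(u1, u2)\<in>ks (delta (mono u)).
           smultA (iota (lk (delta P) (u, w) * lk (delta (mono u)) (u1, u2))) (smultA (R u1 u2) (Mo w)))"
      unfolding delta2_def by (simp add: Lam_sum[OF gK] Lam_single[OF gK] split_def)
    also have "\<dots> = (\<Sum>(u, w)\<in>ks (delta P). smultA (iota (lk (delta P) (u, w))) (smultA (rho u) (Mo w)))"
    proof (rule sum.cong[OF refl], clarify)
      fix u w
      have "rho u = (\<Sum>(u1, u2)\<in>ks (delta (mono u)). iota (lk (delta (mono u)) (u1, u2)) * R u1 u2)"
        by (simp add: rho_def Lam_def delta_mono split_def)
      then show "(\<Sum>(u1, u2)\<in>ks (delta (mono u)). smultA (iota (lk (delta P) (u, w) * lk (delta (mono u)) (u1, u2))) (smultA (R u1 u2) (Mo w))) =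
          smultA (iota (lk (delta P) (u, w))) (smultA (rho u) (Mo w))"
        by (simp add: smultA_sum2 smultA_sum split_def io(2) mult.assoc)
    qed
    also have "\<dots> = LK (\<lambda>(u, w). smultA (rho u) (Mo w)) (delta P)"
      by (simp add: Lam_def split_def)
    finally show ?thesis .
  qed
  have e3: "LK (\<lambda>(u, w). smultA (rho u) (Mo w)) (delta P) = (\<Sum>a\<in>ks P. smultA (iota (lk P a)) (EQm a))"
    unfolding delta_def by (simp add: Lam_sum[OF gK] Lam_map[OF gK] EQm_def)
  show ?thesis using e1 e2 e3 by simp
qed

lemma conj1: "E (embA iota P) = EQ iota r P"
  by (simp add: E_embA EQ_decomp EQm_E)

end

theorem theorem3p3:
  fixes iota :: "complex \<Rightarrow> 'a::comm_ring_1"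
    and r :: "T2 \<Rightarrow> 'a"
  assumes "calg_hom iota"
    and "bicharacter iota r"
  shows "(\<forall>P. expQp iota r (embA iota P) = EQ iota r P)
    \<and> (\<forall>P. expQp iota r (embA iota P) = bullet_poly iota (symmetrization iota r) P)
    \<and> (\<forall>F G. expQp iota r (F + G) = expQp iota r F + expQp iota r G)
    \<and> (\<forall>c F. expQp iota r (smultA c F) = smultA c (expQp iota r F))
    \<and> (\<forall>F G. expQp iota r (F * G) = bullet iota (symmetrization iota r) (expQp iota r F) (expQp iota r G))
    \<and> expQp iota r 1 = 1"
proof -
  interpret thm_ctx iota r using assms by unfold_locales
  show ?thesis using conj1 conj2 E_add E_smultA E_mult E_one by blast
qed

end
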